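(* In the trilevel setting, let $\Omega:=\{x\in\mathrm{Fix}(W):\langle (I-T)x,y-x\rangle\ge0\ \forall y\in\mathrm{Fix}(W)\}$ be nonempty. Assume $\lim_{k\to\infty}\beta_k/\alpha_k=+\infty$, $\beta_k\to0$, $\alpha_k\to0$, $\sum_k\alpha_k=\infty$, there is $K>0$ with $\limsup_{k}\frac1{\alpha_k}\left|\frac1{\beta_k}-\frac1{\beta_{k-1}}\right|\le K$, $\limsup_{k}\frac{|\beta_k-\beta_{k-1}|+|\alpha_k-\alpha_{k-1}|}{\alpha_k\beta_k}=0$, and that the trilevel iteration sequence $\{x^k\}$ is bounded. Suppose further $(A_1)''$ $\limsup_{k\to\infty}\frac{d(x^{k+1},\mathrm{Fix}(W))}{\alpha_k}<\infty$. Then $\{x^k\}$ converges to the unique $x^*\in\Omega$ satisfying $\langle x^*-S(x^* ),x-x^*\rangle\ge0$ for all $x\in\Omega$.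
   Context: Trilevel setting. Let $f_1,f_2:\mathbb R^n\to\mathbb R$ be convex and continuously differentiable with $L_{f_i}$-Lipschitz gradients, and $g_1,g_2:\mathbb R^n\to(-\infty,+\infty]$ proper, lower semicontinuous and convex; put $\phi_i=f_i+g_i$. Let $\omega:\mathbb R^n\to\mathbb R$ be $\mu$-strongly convex and continuously differentiable with $L_\omega$-Lipschitz gradient. Let $Y^*=\arg\min_{x\in\mathbb R^n}\phi_2(x)$ and $X^*=\arg\min_{x\in Y^*}\phi_1(x)$, both assumed nonempty. For a proper lsc convex $g$, $\mathrm{prox}_g(x)=\arg\min_{u}\{g(u)+\tfrac12\|u-x\|^2\}$. Fix $u\in(0,\tfrac{2}{L_\omega+\mu}]$, $t\in(0,1/L_{f_1}]$, $s\in(0,1/L_{f_2}]$ and define $S(x)=x-u\nabla\omega(x)$, $T(x)=\mathrm{prox}_{tg_1}(x-t\nabla f_1(x))$, $W(x)=\mathrm{prox}_{sg_2}(x-s\nabla f_2(x))$. Then $S$ is a contraction with constant $r=\sqrt{1-\tfrac{2u\mu L_\omega}{\mu+L_\omega}}\in[0,1)$, $T,W$ are nonexpansive, $\mathrm{Fix}(W)=Y^*$. Given $x^0\in\mathbb R^n$ and real sequences $\alpha_k,\beta_k\in(0,1)$, the trilevel iteration sequence is $x^{k+1}=\alpha_kS(x^k)+(1-\alpha_k)\beta_kT(x^k)+(1-\alpha_k)(1-\beta_k)W(x^k)$, $k\ge0$. $I$ is the identity, $d(x,A)=\inf_{a\in A}\|x-a\|$. *)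

theory Defs
  imports "HOL-Analysis.Analysis"
begin

definition proper_fun :: "('a \<Rightarrow> ereal) \<Rightarrow> bool" where
  "proper_fun g \<longleftrightarrow> (\<forall>x. g x \<noteq> -\<infinity>) \<and> (\<exists>x. g x \<noteq> \<infinity>)"

definition lsc_fun :: "('a::topological_space \<Rightarrow> ereal) \<Rightarrow> bool" where
  "lsc_fun g \<longleftrightarrow> (\<forall>c. closed {x. g x \<le> c})"

definition convex_fun :: "('a::real_vector \<Rightarrow> ereal) \<Rightarrow> bool" where
  "convex_fun g \<longleftrightarrow> (\<forall>x y a. 0 \<le> a \<and> a \<le> 1 \<longrightarrow>
     g ((1 - a) *\<^sub>R x + a *\<^sub>R y) \<le> ereal (1 - a) * g x + ereal a * g y)"

definition strongly_convex :: "real \<Rightarrow> ('a::real_normed_vector \<Rightarrow> real) \<Rightarrow> bool" where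
  "strongly_convex \<mu> w \<longleftrightarrow> (\<forall>x y a. 0 \<le> a \<and> a \<le> 1 \<longrightarrow>
     w ((1 - a) *\<^sub>R x + a *\<^sub>R y) \<le> (1 - a) * w x + a * w y
        - \<mu> / 2 * a * (1 - a) * (norm (x - y))\<^sup>2)"

definition is_gradient :: "('a::real_inner \<Rightarrow> real) \<Rightarrow> ('a \<Rightarrow> 'a) \<Rightarrow> bool" where
  "is_gradient f gf \<longleftrightarrow> (\<forall>x. (f has_derivative (\<lambda>h. gf x \<bullet> h)) (at x))"

definition prox :: "('a::real_normed_vector \<Rightarrow> ereal) \<Rightarrow> 'a \<Rightarrow> 'a" where
  "prox g x = (THE p. \<forall>v. g p + ereal ((norm (p - x))\<^sup>2 / 2) \<le> g v + ereal ((norm (v - x))\<^sup>2 / 2))"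

definition fb_step :: "real \<Rightarrow> ('a::real_normed_vector \<Rightarrow> ereal) \<Rightarrow> ('a \<Rightarrow> 'a) \<Rightarrow> 'a \<Rightarrow> 'a" where
  "fb_step c g gf x = prox (\<lambda>v. ereal c * g v) (x - c *\<^sub>R gf x)"

definition Fix :: "('a \<Rightarrow> 'a) \<Rightarrow> 'a set" where
  "Fix F = {x. F x = x}"

end

theory Submission
  imports Defs
begin

lemma xu_lemma:
  fixes s \<gamma> \<delta> :: "nat \<Rightarrow> real"
  assumes s0: "\<And>n. 0 \<le> s n" and g01: "\<And>n. 0 \<le> \<gamma> n \<and> \<gamma> n \<le> 1"
    and ns: "\<not> summable \<gamma>"
    and rec: "eventually (\<lambda>n. s (Suc n) \<le> (1 - \<gamma> n) * s n + \<gamma> n * \<delta> n) sequentially"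
    and dl: "\<And>\<epsilon>. \<epsilon> > 0 \<Longrightarrow> eventually (\<lambda>n. \<delta> n \<le> \<epsilon>) sequentially"
  shows "s \<longlonglongrightarrow> 0"
proof (rule LIMSEQ_I)
  fix r :: real assume "r > 0"
  define \<epsilon> where "\<epsilon> = r / 3"
  have ep: "\<epsilon> > 0" using \<open>r>0\<close> by (simp add: \<epsilon>_def)
  from eventually_conj[OF rec dl[OF ep]] obtain N where
    N: "\<And>n. n \<ge> N \<Longrightarrow> s (Suc n) \<le> (1 - \<gamma> n) * s n + \<gamma> n * \<delta> n \<and> \<delta> n \<le> \<epsilon>"
    by (auto simp: eventually_sequentially)
  define t where "t n = max (s n - \<epsilon>) 0" for n
  have tstep: "t (Suc n) \<le> exp (- \<gamma> n) * t n" if "n \<ge> N" for n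
  proof -
    have "s (Suc n) - \<epsilon> \<le> (1 - \<gamma> n) * (s n - \<epsilon>)"
    proof -
      have "\<gamma> n * \<delta> n \<le> \<gamma> n * \<epsilon>" using N[OF that] g01[of n] by (simp add: mult_left_mono)
      then show ?thesis using N[OF that] by (simp add: algebra_simps)
    qed
    also have "\<dots> \<le> (1 - \<gamma> n) * t n" using g01[of n] by (intro mult_left_mono) (auto simp: t_def)
    finally have a: "s (Suc n) - \<epsilon> \<le> (1 - \<gamma> n) * t n" .
    have "(1 - \<gamma> n) \<le> exp (- \<gamma> n)" using exp_ge_add_one_self[of "- \<gamma> n"] by simp
    moreover have "t n \<ge> 0" by (simp add: t_def)
    ultimately have b: "(1 - \<gamma> n) * t n \<le> exp (- \<gamma> n) * t n" by (simp add: mult_right_mono)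
    show ?thesis unfolding t_def using a b \<open>t n \<ge> 0\<close> by (auto simp: t_def)
  qed
  have tprod: "t (N + m) \<le> exp (- (\<Sum>i<m. \<gamma> (N + i))) * t N" for m
  proof (induction m)
    case 0 then show ?case by simp
  next
    case (Suc m)
    have "t (N + Suc m) \<le> exp (- \<gamma> (N + m)) * t (N + m)" using tstep[of "N+m"] by simp
    also have "\<dots> \<le> exp (- \<gamma> (N + m)) * (exp (- (\<Sum>i<m. \<gamma> (N + i))) * t N)"
      using Suc by (intro mult_left_mono) auto
    also have "\<dots> = exp (- (\<Sum>i<Suc m. \<gamma> (N + i))) * t N"
    proof -
      have "exp (- \<gamma> (N + m)) * exp (- (\<Sum>i<m. \<gamma> (N + i))) = exp (- (\<Sum>i<Suc m. \<gamma> (N + i)))"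
        unfolding exp_add[symmetric] sum.lessThan_Suc by (simp add: algebra_simps)
      then show ?thesis by (metis mult.assoc)
    qed
    finally show ?case .
  qed
  have ns': "\<not> summable (\<lambda>i. \<gamma> (i + N))" using ns by simp
  have unb: "\<exists>m. (\<Sum>i<m. \<gamma> (N + i)) > B" for B
  proof (rule ccontr)
    assume "\<not> ?thesis"
    then have h: "(\<Sum>i<m. \<gamma> (N + i)) \<le> B" for m using not_less by blast
    have "(\<Sum>k\<le>n. \<gamma> (k + N)) \<le> B" for n
      using h[of "Suc n"] by (simp add: lessThan_Suc_atMost add.commute)
    then have "summable (\<lambda>i. \<gamma> (i + N))" using g01 by (intro bounded_imp_summable) auto
    then show False using ns' by simp
  qed
  have tN: "t N \<ge> 0" by (simp add: t_def)
  obtain m0 where m0: "(\<Sum>i<m0. \<gamma> (N + i)) > ln ((t N + 1) / \<epsilon>)" using unb by blast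
  show "\<exists>no. \<forall>n\<ge>no. norm (s n - 0) < r"
  proof (intro exI allI impI)
    fix n assume n: "n \<ge> N + m0"
    define m where "m = n - N"
    have nm: "n = N + m" and mm: "m \<ge> m0" using n by (auto simp: m_def)
    have "(\<Sum>i<m0. \<gamma> (N + i)) \<le> (\<Sum>i<m. \<gamma> (N + i))"
      using mm g01 by (intro sum_mono2) auto
    with m0 have gt: "(\<Sum>i<m. \<gamma> (N + i)) > ln ((t N + 1) / \<epsilon>)" by linarith
    have "exp (- (\<Sum>i<m. \<gamma> (N + i))) < exp (- ln ((t N + 1) / \<epsilon>))" using gt by simp
    also have "\<dots> = \<epsilon> / (t N + 1)" using ep tN by (simp add: exp_minus ln_div exp_diff)
    finally have "exp (- (\<Sum>i<m. \<gamma> (N + i))) * t N \<le> \<epsilon> / (t N + 1) * t N"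
      using tN by (intro mult_right_mono) auto
    also have "\<dots> \<le> \<epsilon>" using tN ep by (simp add: field_simps)
    finally have "t n \<le> \<epsilon>" using tprod[of m] nm by simp
    then have "s n \<le> 2 * \<epsilon>" by (simp add: t_def)
    then show "norm (s n - 0) < r" using s0[of n] \<open>r>0\<close> by (simp add: \<epsilon>_def)
  qed
qed


lemma nonexp_cont:
  assumes "\<And>a b. norm (T a - T b) \<le> norm (a - b)"
  shows "continuous_on UNIV T"
proof -
  have "1-lipschitz_on UNIV T" by (rule lipschitz_onI) (auto simp: dist_norm assms)
  then show ?thesis by (rule lipschitz_on_continuous_on)
qed

lemma inner_add_sq: "(a + e) \<bullet> (a + e) = a \<bullet> a + 2 * (a \<bullet> e) + e \<bullet> (e::'a::real_inner)"
  by (simp add: inner_add_left inner_add_right inner_commute)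

lemma nonexp_fix_ineq:
  fixes W :: "'a::real_inner \<Rightarrow> 'a"
  assumes "\<And>a b. norm (W a - W b) \<le> norm (a - b)" and "W p = p"
  shows "2 * ((z - p) \<bullet> (W z - z)) + (W z - z) \<bullet> (W z - z) \<le> 0"
proof -
  have "norm (W z - p) \<le> norm (z - p)" using assms(1)[of z p] assms(2) by simp
  then have "(W z - p) \<bullet> (W z - p) \<le> (z - p) \<bullet> (z - p)" by (simp add: norm_le)
  moreover have "W z - p = (z - p) + (W z - z)" by simp
  ultimately have "((z - p) + (W z - z)) \<bullet> ((z - p) + (W z - z)) \<le> (z - p) \<bullet> (z - p)" by metis
  moreover have "((z - p) + (W z - z)) \<bullet> ((z - p) + (W z - z)) = (z - p) \<bullet> (z - p) + 2 * ((z - p) \<bullet> (W z - z)) + (W z - z) \<bullet> (W z - z)"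
    by (rule inner_add_sq)
  ultimately show ?thesis by linarith
qed

lemma fix_closed:
  assumes "\<And>a b. norm (W a - W b) \<le> norm (a - b)"
  shows "closed (Fix W)"
  unfolding Fix_def by (rule closed_Collect_eq) (auto intro: nonexp_cont[OF assms] continuous_on_id)

lemma fix_convex:
  fixes W :: "'a::real_inner \<Rightarrow> 'a"
  assumes W: "\<And>a b. norm (W a - W b) \<le> norm (a - b)"
  shows "convex (Fix W)"
proof (rule convexI)
  fix p q :: 'a and u v :: real
  assume p: "p \<in> Fix W" and q: "q \<in> Fix W" and "0 \<le> u" "0 \<le> v" "u + v = 1"
  then have uv: "0 \<le> u \<and> 0 \<le> v \<and> u + v = 1" by simp
  define z where "z = u *\<^sub>R p + v *\<^sub>R q"
  define e where "e = W z - z"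
  have h1: "2 * ((z - p) \<bullet> e) + e \<bullet> e \<le> 0" unfolding e_def
    by (rule nonexp_fix_ineq[OF W]) (use p in \<open>auto simp: Fix_def\<close>)
  have h2: "2 * ((z - q) \<bullet> e) + e \<bullet> e \<le> 0" unfolding e_def
    by (rule nonexp_fix_ineq[OF W]) (use q in \<open>auto simp: Fix_def\<close>)
  have "u *\<^sub>R (z - p) + v *\<^sub>R (z - q) = (u + v) *\<^sub>R z - (u *\<^sub>R p + v *\<^sub>R q)"
    by (simp add: algebra_simps)
  then have zz: "u *\<^sub>R (z - p) + v *\<^sub>R (z - q) = 0"
    using uv unfolding z_def by simp
  have "u * ((z - p) \<bullet> e) + v * ((z - q) \<bullet> e) = (u *\<^sub>R (z - p) + v *\<^sub>R (z - q)) \<bullet> e"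
    by (simp add: inner_add_left)
  then have s0: "u * ((z - p) \<bullet> e) + v * ((z - q) \<bullet> e) = 0" using zz by simp
  have "u * (2 * ((z - p) \<bullet> e) + e \<bullet> e) + v * (2 * ((z - q) \<bullet> e) + e \<bullet> e) \<le> 0"
    using h1 h2 uv by (meson add_nonpos_nonpos mult_nonneg_nonpos)
  then have "(u + v) * (e \<bullet> e) \<le> 0" using s0 by (simp add: algebra_simps)
  then have "e \<bullet> e \<le> 0" using uv by simp
  then have "e = 0" using inner_gt_zero_iff[of e] by linarith
  then show "u *\<^sub>R p + v *\<^sub>R q \<in> Fix W" by (simp add: Fix_def e_def z_def)
qed

lemma nonexp_mono:
  fixes T :: "'a::real_inner \<Rightarrow> 'a"
  assumes T: "\<And>a b. norm (T a - T b) \<le> norm (a - b)"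
  shows "((a - T a) - (b - T b)) \<bullet> (a - b) \<ge> 0"
proof -
  have "(T a - T b) \<bullet> (a - b) \<le> norm (T a - T b) * norm (a - b)" by (rule norm_cauchy_schwarz)
  also have "\<dots> \<le> norm (a - b) * norm (a - b)" using T[of a b] by (simp add: mult_right_mono)
  finally have "(T a - T b) \<bullet> (a - b) \<le> (a - b) \<bullet> (a - b)" by (simp add: dot_square_norm power2_eq_square)
  then show ?thesis by (simp add: inner_diff_left)
qed

lemma minty:
  fixes T :: "'a::real_inner \<Rightarrow> 'a"
  assumes T: "\<And>a b. norm (T a - T b) \<le> norm (a - b)" and F: "convex F"
  shows "{z \<in> F. \<forall>y\<in>F. (z - T z) \<bullet> (y - z) \<ge> 0} = {z \<in> F. \<forall>y\<in>F. (y - T y) \<bullet> (y - z) \<ge> 0}"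
proof (intro set_eqI iffI)
  fix z assume z: "z \<in> {z \<in> F. \<forall>y\<in>F. (z - T z) \<bullet> (y - z) \<ge> 0}"
  show "z \<in> {z \<in> F. \<forall>y\<in>F. (y - T y) \<bullet> (y - z) \<ge> 0}"
  proof (safe)
    show "z \<in> F" using z by simp
    fix y assume y: "y \<in> F"
    have "((y - T y) - (z - T z)) \<bullet> (y - z) \<ge> 0" by (rule nonexp_mono[OF T])
    moreover have "(z - T z) \<bullet> (y - z) \<ge> 0" using z y by simp
    ultimately show "(y - T y) \<bullet> (y - z) \<ge> 0" unfolding inner_diff_left by linarith
  qed
next
  fix z assume z: "z \<in> {z \<in> F. \<forall>y\<in>F. (y - T y) \<bullet> (y - z) \<ge> 0}"
  show "z \<in> {z \<in> F. \<forall>y\<in>F. (z - T z) \<bullet> (y - z) \<ge> 0}"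
  proof (safe)
    show zF: "z \<in> F" using z by simp
    fix y assume y: "y \<in> F"
    define d where "d = y - z"
    have key: "(z - T z) \<bullet> d \<ge> - 2 * \<tau> * (d \<bullet> d)" if t: "0 < \<tau>" "\<tau> \<le> 1" for \<tau>
    proof -
      define w where "w = z + \<tau> *\<^sub>R d"
      have "w = (1 - \<tau>) *\<^sub>R z + \<tau> *\<^sub>R y" by (simp add: w_def d_def algebra_simps)
      then have wF: "w \<in> F" using convexD_alt[OF F zF y, of \<tau>] t by simp
      have "(w - T w) \<bullet> (w - z) \<ge> 0" using z wF by simp
      then have "\<tau> * ((w - T w) \<bullet> d) \<ge> 0" by (simp add: w_def)
      then have a: "(w - T w) \<bullet> d \<ge> 0" using t by (simp add: zero_le_mult_iff)
      have "((w - T w) - (z - T z)) \<bullet> d \<le> norm ((w - T w) - (z - T z)) * norm d"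
        by (rule norm_cauchy_schwarz)
      also have "norm ((w - T w) - (z - T z)) \<le> norm (w - z) + norm (T w - T z)"
      proof -
        have e: "(w - T w) - (z - T z) = (w - z) - (T w - T z)" by (simp add: algebra_simps)
        show ?thesis unfolding e by (rule norm_triangle_ineq4)
      qed
      then have "norm ((w - T w) - (z - T z)) \<le> 2 * norm (w - z)" using T[of w z] by simp
      then have "norm ((w - T w) - (z - T z)) * norm d \<le> 2 * norm (w - z) * norm d"
        by (simp add: mult_right_mono)
      also have "2 * norm (w - z) * norm d = 2 * \<tau> * (d \<bullet> d)"
        using t by (simp add: w_def dot_square_norm power2_eq_square)
      finally have "((w - T w) - (z - T z)) \<bullet> d \<le> 2 * \<tau> * (d \<bullet> d)" .
      then show ?thesis using a by (simp add: inner_diff_left)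
    qed
    show "(z - T z) \<bullet> (y - z) \<ge> 0"
    proof (rule ccontr)
      assume "\<not> ?thesis"
      then have neg: "(z - T z) \<bullet> d < 0" by (simp add: d_def)
      have "d \<noteq> 0" using neg by auto
      then have dd: "d \<bullet> d > 0" by simp
      define \<tau> where "\<tau> = min 1 (- ((z - T z) \<bullet> d) / (4 * (d \<bullet> d)))"
      have q: "- ((z - T z) \<bullet> d) / (4 * (d \<bullet> d)) > 0" using neg dd by (intro divide_pos_pos) auto
      have tp: "0 < \<tau>" "\<tau> \<le> 1" using q by (auto simp: \<tau>_def)
      have tle: "\<tau> \<le> - ((z - T z) \<bullet> d) / (4 * (d \<bullet> d))" unfolding \<tau>_def by simp
      have P: "4 * (d \<bullet> d) > 0" using dd by simp
      have "\<tau> * (4 * (d \<bullet> d)) \<le> (- ((z - T z) \<bullet> d) / (4 * (d \<bullet> d))) * (4 * (d \<bullet> d))"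
        using tle P by (intro mult_right_mono) auto
      also have "\<dots> = - ((z - T z) \<bullet> d)" using P by simp
      finally have "\<tau> * (4 * (d \<bullet> d)) \<le> - ((z - T z) \<bullet> d)" .
      moreover have "\<tau> * (d \<bullet> d) > 0" using tp dd by simp
      ultimately have "- 2 * \<tau> * (d \<bullet> d) > (z - T z) \<bullet> d" by linarith
      then show False using key[OF tp] by linarith
    qed
  qed
qed


lemma Om_closed_convex:
  fixes T W :: "'a::euclidean_space \<Rightarrow> 'a"
  assumes T: "\<And>a b. norm (T a - T b) \<le> norm (a - b)"
    and W: "\<And>a b. norm (W a - W b) \<le> norm (a - b)"
  shows "closed {z \<in> Fix W. \<forall>y\<in>Fix W. (z - T z) \<bullet> (y - z) \<ge> 0}"
    and "convex {z \<in> Fix W. \<forall>y\<in>Fix W. (z - T z) \<bullet> (y - z) \<ge> 0}"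
proof -
  let ?F = "Fix W"
  have eq: "{z \<in> ?F. \<forall>y\<in>?F. (z - T z) \<bullet> (y - z) \<ge> 0} = ?F \<inter> (\<Inter>y\<in>?F. {z. (y - T y) \<bullet> z \<le> (y - T y) \<bullet> y})"
    unfolding minty[OF T fix_convex[OF W]] by (auto simp: inner_diff_right)
  show "closed {z \<in> ?F. \<forall>y\<in>?F. (z - T z) \<bullet> (y - z) \<ge> 0}"
    unfolding eq
    by (intro closed_Int fix_closed[OF W] closed_INT ballI closed_Collect_le continuous_intros)
  show "convex {z \<in> ?F. \<forall>y\<in>?F. (z - T z) \<bullet> (y - z) \<ge> 0}"
    unfolding eq
    by (intro convex_Int fix_convex[OF W] convex_INT ballI convex_halfspace_le)
qed

lemma vi_exists:
  fixes S :: "'a::euclidean_space \<Rightarrow> 'a"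
  assumes r: "0 \<le> r" "r < 1" and Sc: "\<And>a b. norm (S a - S b) \<le> r * norm (a - b)"
    and Om: "closed Om" "convex Om" "Om \<noteq> {}"
  shows "\<exists>xs\<in>Om. \<forall>z\<in>Om. (xs - S xs) \<bullet> (z - xs) \<ge> 0"
proof -
  define f where "f a = closest_point Om (S a)" for a
  have "\<forall>a b. dist (f a) (f b) \<le> r * dist a b"
  proof (intro allI)
    fix a b
    have "dist (f a) (f b) \<le> dist (S a) (S b)" unfolding f_def
      by (rule closest_point_lipschitz[OF Om(2,1,3)])
    also have "\<dots> \<le> r * dist a b" using Sc[of a b] by (simp add: dist_norm)
    finally show "dist (f a) (f b) \<le> r * dist a b" .
  qed
  then obtain xs where xs: "f xs = xs" using banach_fix_type[OF r] by blast
  have "xs \<in> Om" using xs closest_point_in_set[OF Om(1,3)] unfolding f_def by metis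
  moreover have "\<forall>z\<in>Om. (xs - S xs) \<bullet> (z - xs) \<ge> 0"
  proof
    fix z assume "z \<in> Om"
    have "(S xs - closest_point Om (S xs)) \<bullet> (z - closest_point Om (S xs)) \<le> 0"
      by (rule closest_point_dot[OF Om(2,1) \<open>z \<in> Om\<close>])
    then have "(S xs - xs) \<bullet> (z - xs) \<le> 0" using xs by (simp add: f_def)
    then show "(xs - S xs) \<bullet> (z - xs) \<ge> 0"
      by (metis inner_minus_left minus_diff_eq neg_0_le_iff_le)
  qed
  ultimately show ?thesis by blast
qed

lemma vi_unique:
  fixes S :: "'a::real_inner \<Rightarrow> 'a"
  assumes r: "r < 1" and Sc: "\<And>a b. norm (S a - S b) \<le> r * norm (a - b)"
    and w: "w \<in> Om" "\<forall>z\<in>Om. (w - S w) \<bullet> (z - w) \<ge> 0"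
    and xs: "xs \<in> Om" "\<forall>z\<in>Om. (xs - S xs) \<bullet> (z - xs) \<ge> 0"
  shows "w = xs"
proof -
  have a: "(w - S w) \<bullet> (xs - w) \<ge> 0" using w xs by auto
  have b: "(xs - S xs) \<bullet> (w - xs) \<ge> 0" using w xs by auto
  have "(w - S w) \<bullet> (xs - w) + (xs - S xs) \<bullet> (w - xs) = (S w - S xs) \<bullet> (w - xs) - (w - xs) \<bullet> (w - xs)"
    by (simp add: inner_diff_left inner_diff_right inner_commute)
  with a b have c: "(w - xs) \<bullet> (w - xs) \<le> (S w - S xs) \<bullet> (w - xs)" by linarith
  have "(S w - S xs) \<bullet> (w - xs) \<le> norm (S w - S xs) * norm (w - xs)" by (rule norm_cauchy_schwarz)
  also have "\<dots> \<le> r * norm (w - xs) * norm (w - xs)" using Sc[of w xs] by (simp add: mult_right_mono)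
  finally have "norm (w - xs) * norm (w - xs) \<le> r * (norm (w - xs) * norm (w - xs))"
    using c by (simp add: dot_square_norm power2_eq_square mult.assoc)
  then have "(1 - r) * (norm (w - xs) * norm (w - xs)) \<le> 0" by (simp add: algebra_simps)
  then have "norm (w - xs) * norm (w - xs) \<le> 0" using r by (simp add: mult_le_0_iff)
  then have "norm (w - xs) = 0" using mult_nonneg_nonneg[OF norm_ge_zero norm_ge_zero, of "w - xs" "w - xs"] by (simp add: mult_le_0_iff)
  then show ?thesis by simp
qed


lemma coef_diff1:
  fixes a a' b b' :: real
  assumes "0 \<le> a'" "a' \<le> 1" "0 \<le> b" "b \<le> 1"
  shows "\<bar>(1 - a') * b' - (1 - a) * b\<bar> \<le> \<bar>a' - a\<bar> + \<bar>b' - b\<bar>"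
proof -
  have e: "(1 - a') * b' - (1 - a) * b = (1 - a') * (b' - b) - b * (a' - a)" by (simp add: algebra_simps)
  have "\<bar>(1 - a') * (b' - b)\<bar> \<le> \<bar>b' - b\<bar>" using assms by (simp add: abs_mult mult_left_le_one_le)
  moreover have "\<bar>b * (a' - a)\<bar> \<le> \<bar>a' - a\<bar>" using assms by (simp add: abs_mult mult_left_le_one_le)
  ultimately show ?thesis unfolding e by (smt (verit))
qed

lemma coef_diff2:
  fixes a a' b b' :: real
  assumes "0 \<le> a'" "a' \<le> 1" "0 \<le> b" "b \<le> 1"
  shows "\<bar>(1 - a') * (1 - b') - (1 - a) * (1 - b)\<bar> \<le> \<bar>a' - a\<bar> + \<bar>b' - b\<bar>"
proof -
  have e: "(1 - a') * (1 - b') - (1 - a) * (1 - b) = - ((1 - a') * (b' - b)) - (1 - b) * (a' - a)" by (simp add: algebra_simps)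
  have "\<bar>(1 - a') * (b' - b)\<bar> \<le> \<bar>b' - b\<bar>" using assms by (simp add: abs_mult mult_left_le_one_le)
  moreover have "\<bar>(1 - b) * (a' - a)\<bar> \<le> \<bar>a' - a\<bar>" using assms by (simp add: abs_mult mult_left_le_one_le)
  ultimately show ?thesis unfolding e by (smt (verit))
qed

lemma step_diff:
  fixes S T W :: "'a::real_normed_vector \<Rightarrow> 'a" and x :: "nat \<Rightarrow> 'a"
  assumes r: "0 \<le> r" and Sc: "\<And>a b. norm (S a - S b) \<le> r * norm (a - b)"
    and Tn: "\<And>a b. norm (T a - T b) \<le> norm (a - b)"
    and Wn: "\<And>a b. norm (W a - W b) \<le> norm (a - b)"
    and \<alpha>r: "\<And>k. 0 < \<alpha> k \<and> \<alpha> k < 1" and \<beta>r: "\<And>k. 0 < \<beta> k \<and> \<beta> k < 1"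
    and iter: "\<And>k. x (Suc k) = \<alpha> k *\<^sub>R S (x k) + ((1 - \<alpha> k) * \<beta> k) *\<^sub>R T (x k)
                           + ((1 - \<alpha> k) * (1 - \<beta> k)) *\<^sub>R W (x k)"
    and M: "\<And>k. norm (S (x k)) \<le> M \<and> norm (T (x k)) \<le> M \<and> norm (W (x k)) \<le> M"
  shows "norm (x (Suc (Suc n)) - x (Suc n)) \<le> (1 - \<alpha> (Suc n) * (1 - r)) * norm (x (Suc n) - x n)
           + 3 * M * (\<bar>\<alpha> (Suc n) - \<alpha> n\<bar> + \<bar>\<beta> (Suc n) - \<beta> n\<bar>)"
proof -
  define a where "a = \<alpha> n"
  define a' where "a' = \<alpha> (Suc n)"
  define b where "b = \<beta> n"
  define b' where "b' = \<beta> (Suc n)"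
  define X where "X = x (Suc n)"
  define Y where "Y = x n"
  define P where "P = a' *\<^sub>R (S X - S Y) + ((1 - a') * b') *\<^sub>R (T X - T Y) + ((1 - a') * (1 - b')) *\<^sub>R (W X - W Y)"
  define Q where "Q = (a' - a) *\<^sub>R S Y + ((1 - a') * b' - (1 - a) * b) *\<^sub>R T Y + ((1 - a') * (1 - b') - (1 - a) * (1 - b)) *\<^sub>R W Y"
  have i1: "x (Suc (Suc n)) = a' *\<^sub>R S X + ((1 - a') * b') *\<^sub>R T X + ((1 - a') * (1 - b')) *\<^sub>R W X"
    unfolding a'_def b'_def X_def by (rule iter)
  have i2: "X = a *\<^sub>R S Y + ((1 - a) * b) *\<^sub>R T Y + ((1 - a) * (1 - b)) *\<^sub>R W Y"
    unfolding a_def b_def X_def Y_def by (rule iter)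
  have PQ: "x (Suc (Suc n)) - X = P + Q"
    unfolding i1 P_def Q_def by (subst (2) i2) (simp add: algebra_simps)
  have ab: "0 < a" "a < 1" "0 < a'" "a' < 1" "0 < b" "b < 1" "0 < b'" "b' < 1"
    using \<alpha>r \<beta>r by (auto simp: a_def a'_def b_def b'_def)
  have c1: "0 \<le> (1 - a') * b'" "0 \<le> (1 - a') * (1 - b')" using ab by auto
  have "norm P \<le> norm (a' *\<^sub>R (S X - S Y)) + norm (((1 - a') * b') *\<^sub>R (T X - T Y)) + norm (((1 - a') * (1 - b')) *\<^sub>R (W X - W Y))"
    unfolding P_def by (meson norm_triangle_le norm_triangle_ineq add_mono order_refl)
  also have "\<dots> = a' * norm (S X - S Y) + ((1 - a') * b') * norm (T X - T Y) + ((1 - a') * (1 - b')) * norm (W X - W Y)"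
    using ab c1 by simp
  also have "\<dots> \<le> a' * (r * norm (X - Y)) + ((1 - a') * b') * norm (X - Y) + ((1 - a') * (1 - b')) * norm (X - Y)"
    using ab c1 Sc[of X Y] Tn[of X Y] Wn[of X Y] by (intro add_mono mult_left_mono) auto
  also have "\<dots> = (1 - a' * (1 - r)) * norm (X - Y)" by (simp add: algebra_simps)
  finally have nP: "norm P \<le> (1 - a' * (1 - r)) * norm (X - Y)" .
  have "norm Q \<le> norm ((a' - a) *\<^sub>R S Y) + norm (((1 - a') * b' - (1 - a) * b) *\<^sub>R T Y) + norm (((1 - a') * (1 - b') - (1 - a) * (1 - b)) *\<^sub>R W Y)"
    unfolding Q_def by (meson norm_triangle_le norm_triangle_ineq add_mono order_refl)
  also have "\<dots> = \<bar>a' - a\<bar> * norm (S Y) + \<bar>(1 - a') * b' - (1 - a) * b\<bar> * norm (T Y) + \<bar>(1 - a') * (1 - b') - (1 - a) * (1 - b)\<bar> * norm (W Y)"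
    by simp
  also have "\<dots> \<le> (\<bar>a' - a\<bar> + \<bar>b' - b\<bar>) * M + (\<bar>a' - a\<bar> + \<bar>b' - b\<bar>) * M + (\<bar>a' - a\<bar> + \<bar>b' - b\<bar>) * M"
    using M[of n] coef_diff1[of a' b b' a] coef_diff2[of a' b b' a] ab
    by (intro add_mono mult_mono) (auto simp: Y_def)
  finally have nQ: "norm Q \<le> 3 * M * (\<bar>a' - a\<bar> + \<bar>b' - b\<bar>)" by (simp add: algebra_simps)
  have "norm (x (Suc (Suc n)) - X) \<le> norm P + norm Q" unfolding PQ by (rule norm_triangle_ineq)
  with nP nQ show ?thesis by (simp add: a_def a'_def b_def b'_def X_def Y_def)
qed


lemma step3:
  fixes S T W :: "'a::real_normed_vector \<Rightarrow> 'a" and x :: "nat \<Rightarrow> 'a"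
  assumes r: "0 \<le> r" "r < 1" and Sc: "\<And>a b. norm (S a - S b) \<le> r * norm (a - b)"
    and Tn: "\<And>a b. norm (T a - T b) \<le> norm (a - b)"
    and Wn: "\<And>a b. norm (W a - W b) \<le> norm (a - b)"
    and \<alpha>r: "\<And>k. 0 < \<alpha> k \<and> \<alpha> k < 1" and \<beta>r: "\<And>k. 0 < \<beta> k \<and> \<beta> k < 1"
    and iter: "\<And>k. x (Suc k) = \<alpha> k *\<^sub>R S (x k) + ((1 - \<alpha> k) * \<beta> k) *\<^sub>R T (x k)
                           + ((1 - \<alpha> k) * (1 - \<beta> k)) *\<^sub>R W (x k)"
    and M: "\<And>k. norm (S (x k)) \<le> M \<and> norm (T (x k)) \<le> M \<and> norm (W (x k)) \<le> M"
    and \<beta>lim: "\<beta> \<longlonglongrightarrow> 0" and ns: "\<not> summable \<alpha>"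
    and Kb: "eventually (\<lambda>k. 1 / \<alpha> (Suc k) * \<bar>1 / \<beta> (Suc k) - 1 / \<beta> k\<bar> \<le> K) sequentially"
    and dc: "(\<lambda>k. (\<bar>\<beta> (Suc k) - \<beta> k\<bar> + \<bar>\<alpha> (Suc k) - \<alpha> k\<bar>) / (\<alpha> (Suc k) * \<beta> (Suc k))) \<longlonglongrightarrow> 0"
  shows "(\<lambda>k. norm (x (Suc k) - x k) / \<beta> k) \<longlonglongrightarrow> 0"
proof -
  define c where "c = 1 - r"
  have c: "0 < c" "c \<le> 1" using r by (auto simp: c_def)
  define K' where "K' = max K 1"
  have K': "K' > 0" "K \<le> K'" by (auto simp: K'_def)
  have M0: "M \<ge> 0" using M[of 0] norm_ge_zero[of "S (x 0)"] by linarith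
  define D where "D n = norm (x (Suc n) - x n)" for n
  define \<rho> where "\<rho> k = (\<bar>\<beta> (Suc k) - \<beta> k\<bar> + \<bar>\<alpha> (Suc k) - \<alpha> k\<bar>) / (\<alpha> (Suc k) * \<beta> (Suc k))" for k
  define s where "s n = D n / \<beta> n" for n
  define \<gamma> where "\<gamma> n = \<alpha> (Suc n) * c / 2" for n
  define \<delta> where "\<delta> n = 6 * M / c * \<rho> n" for n
  have s0: "0 \<le> s n" for n using \<beta>r[of n] by (simp add: s_def D_def)
  have g01: "0 \<le> \<gamma> n \<and> \<gamma> n \<le> 1" for n
  proof -
    have "\<alpha> (Suc n) * c \<le> 1" using \<alpha>r[of "Suc n"] c by (intro mult_le_one) auto
    then show ?thesis using \<alpha>r[of "Suc n"] c by (auto simp: \<gamma>_def)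
  qed
  have nsg: "\<not> summable \<gamma>"
  proof
    assume "summable \<gamma>"
    then have "summable (\<lambda>n. (2 / c) * \<gamma> n)" by (rule summable_mult)
    moreover have "(\<lambda>n. (2 / c) * \<gamma> n) = (\<lambda>n. \<alpha> (Suc n))" using c by (auto simp: \<gamma>_def)
    ultimately have "summable (\<lambda>n. \<alpha> (Suc n))" by metis
    then show False using ns summable_Suc_iff by blast
  qed
  have evb: "eventually (\<lambda>n. \<beta> n \<le> c / (2 * K')) sequentially"
    using order_tendstoD(2)[OF \<beta>lim, of "c / (2 * K')"] c K' by (auto elim: eventually_mono)
  have rec: "eventually (\<lambda>n. s (Suc n) \<le> (1 - \<gamma> n) * s n + \<gamma> n * \<delta> n) sequentially"
    using eventually_conj[OF Kb evb]
  proof (rule eventually_mono)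
    fix n assume h: "1 / \<alpha> (Suc n) * \<bar>1 / \<beta> (Suc n) - 1 / \<beta> n\<bar> \<le> K \<and> \<beta> n \<le> c / (2 * K')"
    define a' where "a' = \<alpha> (Suc n)"
    define b where "b = \<beta> n"
    define b' where "b' = \<beta> (Suc n)"
    define \<Delta> where "\<Delta> = \<bar>\<alpha> (Suc n) - \<alpha> n\<bar> + \<bar>\<beta> (Suc n) - \<beta> n\<bar>"
    have ab: "0 < a'" "a' < 1" "0 < b" "b < 1" "0 < b'" "b' < 1"
      using \<alpha>r \<beta>r by (auto simp: a'_def b_def b'_def)
    have sd: "D (Suc n) \<le> (1 - a' * c) * D n + 3 * M * \<Delta>"
      using step_diff[where S=S and T=T and W=W and x=x and \<alpha>=\<alpha> and \<beta>=\<beta> and r=r and M=M and n=n, OF r(1) Sc Tn Wn \<alpha>r \<beta>r iter M] by (simp add: D_def a'_def c_def \<Delta>_def)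
    have Dn: "D n \<ge> 0" by (simp add: D_def)
    have h1: "\<bar>1 / b' - 1 / b\<bar> \<le> a' * K'"
    proof -
      have "\<bar>1 / b' - 1 / b\<bar> \<le> a' * K" using h ab
        by (simp add: a'_def b_def b'_def divide_le_eq mult.commute)
      also have "\<dots> \<le> a' * K'" using K' ab by (simp add: mult_left_mono)
      finally show ?thesis .
    qed
    have ratio: "b / b' \<le> 1 + b * (a' * K')"
    proof -
      have "b / b' = 1 + b * (1 / b' - 1 / b)" using ab by (simp add: field_simps)
      also have "\<dots> \<le> 1 + b * \<bar>1 / b' - 1 / b\<bar>" using ab by (simp add: mult_left_mono)
      also have "\<dots> \<le> 1 + b * (a' * K')" using ab h1 by (simp add: mult_left_mono)
      finally show ?thesis .
    qed
    have bK: "b * K' \<le> c / 2" using h K' by (simp add: b_def pos_le_divide_eq algebra_simps)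
    have fac: "(1 - a' * c) * (1 + b * (a' * K')) \<le> 1 - a' * c / 2"
    proof -
      have "(1 - a' * c) * (1 + b * (a' * K')) \<le> 1 - a' * c + b * (a' * K')"
        using ab c K' by (simp add: algebra_simps)
      moreover have "a' * (b * K') \<le> a' * (c / 2)" using bK ab by (simp add: mult_left_mono)
      moreover have "b * (a' * K') = a' * (b * K')" by simp
      ultimately show ?thesis by linarith
    qed
    have ac: "0 \<le> 1 - a' * c" using ab c by (simp add: mult_le_one)
    have "s (Suc n) = D (Suc n) / b'" by (simp add: s_def b'_def)
    also have "\<dots> \<le> ((1 - a' * c) * D n + 3 * M * \<Delta>) / b'" using sd ab by (simp add: divide_right_mono)
    also have "\<dots> = (1 - a' * c) * s n * (b / b') + 3 * M * \<Delta> / b'"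
      using ab by (simp add: s_def b_def field_simps)
    also have "(1 - a' * c) * s n * (b / b') \<le> (1 - a' * c) * s n * (1 + b * (a' * K'))"
      using ratio ac s0[of n] by (intro mult_left_mono) auto
    also have "\<dots> = (1 - a' * c) * (1 + b * (a' * K')) * s n" by simp
    also have "\<dots> \<le> (1 - a' * c / 2) * s n" using fac s0[of n] by (simp add: mult_right_mono)
    also have "3 * M * \<Delta> / b' = \<gamma> n * \<delta> n"
      using ab c by (simp add: \<gamma>_def \<delta>_def \<rho>_def \<Delta>_def a'_def b'_def field_simps)
    finally show "s (Suc n) \<le> (1 - \<gamma> n) * s n + \<gamma> n * \<delta> n" by (simp add: \<gamma>_def a'_def)
  qed
  have dl: "eventually (\<lambda>n. \<delta> n \<le> \<epsilon>) sequentially" if "\<epsilon> > 0" for \<epsilon>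
  proof -
    have "\<delta> \<longlonglongrightarrow> 6 * M / c * 0" unfolding \<delta>_def \<rho>_def by (intro tendsto_mult tendsto_const dc)
    then have "\<delta> \<longlonglongrightarrow> 0" by simp
    from order_tendstoD(2)[OF this that] show ?thesis by (auto elim: eventually_mono)
  qed
  have "s \<longlonglongrightarrow> 0" by (rule xu_lemma[OF s0 g01 nsg rec dl])
  moreover have "s = (\<lambda>k. norm (x (Suc k) - x k) / \<beta> k)" by (simp add: fun_eq_iff s_def D_def)
  ultimately show ?thesis by simp
qed


lemma frac_split:
  fixes u v w aa b :: real
  assumes "b \<noteq> 0" "1 - aa \<noteq> 0"
  shows "(u * w + aa * v) / ((1 - aa) * b) = (u / b) * w / (1 - aa) + (aa / b) * v / (1 - aa)"
proof -
  have g: "(u * w + aa * v) / (d * b) = (u / b) * w / d + (aa / b) * v / d" if "d \<noteq> 0" for d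
    using that assms(1) by (simp add: add_divide_distrib mult.commute)
  show ?thesis by (rule g) (use assms in auto)
qed

lemma step4a:
  fixes S T W :: "'a::real_inner \<Rightarrow> 'a" and x :: "nat \<Rightarrow> 'a"
  assumes Wn: "\<And>a b. norm (W a - W b) \<le> norm (a - b)"
    and \<alpha>r: "\<And>k. 0 < \<alpha> k \<and> \<alpha> k < 1" and \<beta>r: "\<And>k. 0 < \<beta> k \<and> \<beta> k < 1"
    and iter: "\<And>k. x (Suc k) = \<alpha> k *\<^sub>R S (x k) + ((1 - \<alpha> k) * \<beta> k) *\<^sub>R T (x k)
                           + ((1 - \<alpha> k) * (1 - \<beta> k)) *\<^sub>R W (x k)"
    and B: "\<And>k. norm (x k) \<le> B" and M: "\<And>k. norm (S (x k)) \<le> M"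
    and y: "W y = y"
  shows "(x k - T (x k)) \<bullet> (x k - y) \<le>
     (norm (x (Suc k) - x k) / \<beta> k) * (B + norm y) / (1 - \<alpha> k)
     + (\<alpha> k / \<beta> k) * ((B + M) * (B + norm y)) / (1 - \<alpha> k)"
proof -
  define a where "a = \<alpha> k"
  define c1 where "c1 = (1 - \<alpha> k) * \<beta> k"
  define c2 where "c2 = (1 - \<alpha> k) * (1 - \<beta> k)"
  define X where "X = x k"
  have ab: "0 < a" "a < 1" "0 < \<beta> k" "\<beta> k < 1" using \<alpha>r \<beta>r by (auto simp: a_def)
  have c1p: "c1 > 0" "c2 \<ge> 0" using \<alpha>r[of k] \<beta>r[of k] by (auto simp: c1_def c2_def)
  have sum1: "a + c1 + c2 = 1" by (simp add: a_def c1_def c2_def algebra_simps)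
  have "X - x (Suc k) = (a + c1 + c2) *\<^sub>R X - x (Suc k)" using sum1 by simp
  also have "\<dots> = a *\<^sub>R (X - S X) + c1 *\<^sub>R (X - T X) + c2 *\<^sub>R (X - W X)"
    unfolding iter[of k] by (simp add: a_def c1_def c2_def X_def algebra_simps)
  finally have De: "X - x (Suc k) = a *\<^sub>R (X - S X) + c1 *\<^sub>R (X - T X) + c2 *\<^sub>R (X - W X)" .
  have Wi: "(X - W X) \<bullet> (X - y) \<ge> 0"
  proof -
    have "2 * ((X - y) \<bullet> (W X - X)) + (W X - X) \<bullet> (W X - X) \<le> 0" by (rule nonexp_fix_ineq[OF Wn y])
    then have "(X - y) \<bullet> (W X - X) \<le> 0" by (smt (verit) inner_ge_zero)
    then show ?thesis by (metis inner_commute inner_minus_left minus_diff_eq neg_0_le_iff_le)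
  qed
  have inn: "(X - x (Suc k)) \<bullet> (X - y) = a * ((X - S X) \<bullet> (X - y)) + c1 * ((X - T X) \<bullet> (X - y)) + c2 * ((X - W X) \<bullet> (X - y))"
    unfolding De by (simp add: inner_add_left)
  have "c2 * ((X - W X) \<bullet> (X - y)) \<ge> 0" using c1p Wi by simp
  then have "c1 * ((X - T X) \<bullet> (X - y)) \<le> (X - x (Suc k)) \<bullet> (X - y) - a * ((X - S X) \<bullet> (X - y))"
    using inn by linarith
  also have "\<dots> \<le> norm (X - x (Suc k)) * norm (X - y) + a * (norm (X - S X) * norm (X - y))"
  proof -
    have "(X - x (Suc k)) \<bullet> (X - y) \<le> norm (X - x (Suc k)) * norm (X - y)" by (rule norm_cauchy_schwarz)
    moreover have "- ((X - S X) \<bullet> (X - y)) \<le> norm (X - S X) * norm (X - y)"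
      using Cauchy_Schwarz_ineq2[of "X - S X" "X - y"] by (simp add: abs_le_iff)
    moreover have "a * (- ((X - S X) \<bullet> (X - y))) \<le> a * (norm (X - S X) * norm (X - y))"
      using calculation(2) ab by (intro mult_left_mono) auto
    ultimately show ?thesis by simp
  qed
  also have "\<dots> \<le> norm (x (Suc k) - X) * (B + norm y) + a * ((B + M) * (B + norm y))"
  proof -
    have n1: "norm (X - y) \<le> B + norm y" using B[of k] norm_triangle_ineq4[of X y] by (simp add: X_def)
    have n2: "norm (X - S X) \<le> B + M" using B[of k] M[of k] norm_triangle_ineq4[of X "S X"] by (simp add: X_def)
    have "norm (X - x (Suc k)) * norm (X - y) \<le> norm (x (Suc k) - X) * (B + norm y)"
      using n1 by (simp add: norm_minus_commute mult_left_mono)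
    moreover have "norm (X - S X) * norm (X - y) \<le> (B + M) * (B + norm y)"
    proof -
      have "0 \<le> B + M" using n2 norm_ge_zero[of "X - S X"] by linarith
      then show ?thesis using n1 n2 by (intro mult_mono) auto
    qed
    moreover have "a * (norm (X - S X) * norm (X - y)) \<le> a * ((B + M) * (B + norm y))"
      using calculation(2) ab by (intro mult_left_mono) auto
    ultimately show ?thesis by simp
  qed
  finally have main: "c1 * ((X - T X) \<bullet> (X - y)) \<le> norm (x (Suc k) - X) * (B + norm y) + a * ((B + M) * (B + norm y))" .
  have "(X - T X) \<bullet> (X - y) \<le> (norm (x (Suc k) - X) * (B + norm y) + a * ((B + M) * (B + norm y))) / c1"
    using main c1p by (simp add: pos_le_divide_eq mult.commute)
  also have "\<dots> = (norm (x (Suc k) - x k) / \<beta> k) * (B + norm y) / (1 - \<alpha> k)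
     + (\<alpha> k / \<beta> k) * ((B + M) * (B + norm y)) / (1 - \<alpha> k)"
    unfolding c1_def a_def X_def by (rule frac_split) (use ab in \<open>auto simp: a_def\<close>)
  finally show ?thesis by (simp add: X_def)
qed


lemma abstract_main:
  fixes S T W :: "'a::euclidean_space \<Rightarrow> 'a" and x :: "nat \<Rightarrow> 'a" and \<alpha> \<beta> :: "nat \<Rightarrow> real"
  assumes r: "0 \<le> r" "r < 1" and Sc: "\<And>a b. norm (S a - S b) \<le> r * norm (a - b)"
    and Tn: "\<And>a b. norm (T a - T b) \<le> norm (a - b)"
    and Wn: "\<And>a b. norm (W a - W b) \<le> norm (a - b)"
    and \<alpha>r: "\<And>k. 0 < \<alpha> k \<and> \<alpha> k < 1" and \<beta>r: "\<And>k. 0 < \<beta> k \<and> \<beta> k < 1"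
    and iter: "\<And>k. x (Suc k) = \<alpha> k *\<^sub>R S (x k) + ((1 - \<alpha> k) * \<beta> k) *\<^sub>R T (x k)
                           + ((1 - \<alpha> k) * (1 - \<beta> k)) *\<^sub>R W (x k)"
    and OmD: "Om = {z \<in> Fix W. \<forall>y \<in> Fix W. (z - T z) \<bullet> (y - z) \<ge> 0}"
    and Omne: "Om \<noteq> {}"
    and ratio: "filterlim (\<lambda>k. \<beta> k / \<alpha> k) at_top sequentially"
    and \<beta>lim: "\<beta> \<longlonglongrightarrow> 0" and \<alpha>lim: "\<alpha> \<longlonglongrightarrow> 0" and ns: "\<not> summable \<alpha>"
    and Kb: "eventually (\<lambda>k. 1 / \<alpha> (Suc k) * \<bar>1 / \<beta> (Suc k) - 1 / \<beta> k\<bar> \<le> K) sequentially"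
    and dc: "(\<lambda>k. (\<bar>\<beta> (Suc k) - \<beta> k\<bar> + \<bar>\<alpha> (Suc k) - \<alpha> k\<bar>) / (\<alpha> (Suc k) * \<beta> (Suc k))) \<longlonglongrightarrow> 0"
    and xb: "bounded (range x)"
    and A1: "eventually (\<lambda>k. infdist (x (Suc k)) (Fix W) \<le> C * \<alpha> k) sequentially"
  shows "\<exists>xs. xs \<in> Om \<and> (\<forall>z\<in>Om. (xs - S xs) \<bullet> (z - xs) \<ge> 0)
     \<and> (\<forall>w. w \<in> Om \<and> (\<forall>z\<in>Om. (w - S w) \<bullet> (z - w) \<ge> 0) \<longrightarrow> w = xs) \<and> x \<longlonglongrightarrow> xs"
proof -
  let ?F = "Fix W"
  have Fc: "closed ?F" "convex ?F" using fix_closed[OF Wn] fix_convex[OF Wn] by auto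
  have Omc: "closed Om" "convex Om" unfolding OmD using Om_closed_convex[OF Tn Wn] by auto
  have OmF: "Om \<subseteq> ?F" unfolding OmD by auto
  have Fne: "?F \<noteq> {}" using Omne OmF by auto
  obtain xs where xsO: "xs \<in> Om" and xsvi: "\<forall>z\<in>Om. (xs - S xs) \<bullet> (z - xs) \<ge> 0"
    using vi_exists[OF r Sc Omc Omne] by blast
  have uniq: "\<forall>w. w \<in> Om \<and> (\<forall>z\<in>Om. (w - S w) \<bullet> (z - w) \<ge> 0) \<longrightarrow> w = xs"
    using vi_unique[OF r(2) Sc _ _ xsO xsvi] by blast
  have xsF: "W xs = xs" using xsO OmF by (auto simp: Fix_def)
  have xsT: "\<forall>y\<in>?F. (xs - T xs) \<bullet> (y - xs) \<ge> 0" using xsO OmD by auto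
  obtain B0 where B0: "\<forall>v\<in>range x. norm v \<le> B0" using xb unfolding bounded_iff by blast
  define B where "B = max B0 0"
  have B: "\<And>k. norm (x k) \<le> B" and B0': "B \<ge> 0" using B0 by (auto simp: B_def intro: le_max_iff_disj[THEN iffD2])
  define M where "M = norm (S 0) + norm (T 0) + norm (W 0) + B"
  have M: "\<And>k. norm (S (x k)) \<le> M \<and> norm (T (x k)) \<le> M \<and> norm (W (x k)) \<le> M"
  proof -
    fix k
    have "norm (S (x k)) \<le> norm (S 0) + norm (S (x k) - S 0)" by (rule norm_triangle_sub)
    also have "norm (S (x k) - S 0) \<le> r * norm (x k)" using Sc[of "x k" 0] by simp
    also have "r * norm (x k) \<le> norm (x k)" using r by (simp add: mult_left_le_one_le)
    finally have s: "norm (S (x k)) \<le> norm (S 0) + norm (x k)" by simp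
    have "norm (T (x k)) \<le> norm (T 0) + norm (T (x k) - T 0)" by (rule norm_triangle_sub)
    also have "norm (T (x k) - T 0) \<le> norm (x k)" using Tn[of "x k" 0] by simp
    finally have t: "norm (T (x k)) \<le> norm (T 0) + norm (x k)" by simp
    have "norm (W (x k)) \<le> norm (W 0) + norm (W (x k) - W 0)" by (rule norm_triangle_sub)
    also have "norm (W (x k) - W 0) \<le> norm (x k)" using Wn[of "x k" 0] by simp
    finally have w: "norm (W (x k)) \<le> norm (W 0) + norm (x k)" by simp
    show "norm (S (x k)) \<le> M \<and> norm (T (x k)) \<le> M \<and> norm (W (x k)) \<le> M"
      using s t w B[of k] norm_ge_zero[of "S 0"] norm_ge_zero[of "T 0"] norm_ge_zero[of "W 0"]
      unfolding M_def by linarith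
  qed
  have d3: "(\<lambda>k. norm (x (Suc k) - x k) / \<beta> k) \<longlonglongrightarrow> 0"
    by (rule step3[where S=S and T=T and W=W and x=x and \<alpha>=\<alpha> and \<beta>=\<beta> and M=M, OF r Sc Tn Wn \<alpha>r \<beta>r iter M \<beta>lim ns Kb dc])
  have ab: "(\<lambda>k. \<alpha> k / \<beta> k) \<longlonglongrightarrow> 0"
  proof -
    have "(\<lambda>k. inverse (\<beta> k / \<alpha> k)) \<longlonglongrightarrow> 0" by (rule tendsto_inverse_0_at_top[OF ratio])
    then show ?thesis by simp
  qed
  have am: "(\<lambda>k. 1 - \<alpha> k) \<longlonglongrightarrow> 1 - 0" by (intro tendsto_diff tendsto_const \<alpha>lim)
  define e where "e y k = (norm (x (Suc k) - x k) / \<beta> k) * (B + norm y) / (1 - \<alpha> k)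
     + (\<alpha> k / \<beta> k) * ((B + M) * (B + norm y)) / (1 - \<alpha> k)" for y :: 'a and k
  have ebound: "(x k - T (x k)) \<bullet> (x k - y) \<le> e y k" if "y \<in> ?F" for y k
    unfolding e_def
    by (rule step4a[where S=S and T=T and W=W and x=x and \<alpha>=\<alpha> and \<beta>=\<beta> and B=B and M=M, OF Wn \<alpha>r \<beta>r iter B]) (use M that in \<open>auto simp: Fix_def\<close>)
  have elim: "e y \<longlonglongrightarrow> 0" for y
  proof -
    have "e y \<longlonglongrightarrow> 0 * (B + norm y) / (1 - 0) + 0 * ((B + M) * (B + norm y)) / (1 - 0)"
      unfolding e_def by (intro tendsto_intros d3 ab am) auto
    then show ?thesis by simp
  qed
  have dF: "(\<lambda>k. infdist (x k) ?F) \<longlonglongrightarrow> 0"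
  proof -
    have Ca: "(\<lambda>k. C * \<alpha> k) \<longlonglongrightarrow> 0" using tendsto_mult_right_zero[OF \<alpha>lim, of C] by simp
    have "(\<lambda>k. infdist (x (Suc k)) ?F) \<longlonglongrightarrow> 0"
      by (rule tendsto_sandwich[OF _ A1 tendsto_const Ca]) (auto simp: infdist_nonneg)
    then show ?thesis by (rule LIMSEQ_imp_Suc)
  qed
  have claim: "eventually (\<lambda>k. (S xs - xs) \<bullet> (x k - xs) \<le> \<epsilon>) sequentially" if ep: "\<epsilon> > 0" for \<epsilon>
  proof (rule ccontr)
    assume ne: "\<not> ?thesis"
    have "infinite {k. \<not> (S xs - xs) \<bullet> (x k - xs) \<le> \<epsilon>}"
      using ne unfolding not_eventually cofinite_eq_sequentially[symmetric] frequently_cofinite by simp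
    from infinite_enumerate[OF this] obtain \<sigma> :: "nat \<Rightarrow> nat" where
      \<sigma>0: "strict_mono \<sigma>" "\<forall>n. \<sigma> n \<in> {k. \<not> (S xs - xs) \<bullet> (x k - xs) \<le> \<epsilon>}" by blast
    have \<sigma>: "strict_mono \<sigma>" "\<And>n. (S xs - xs) \<bullet> (x (\<sigma> n) - xs) > \<epsilon>" using \<sigma>0 by (auto simp: not_le)
    have "bounded (range (x \<circ> \<sigma>))" using xb by (rule bounded_subset) auto
    then obtain p \<rho> where \<rho>: "strict_mono (\<rho> :: nat \<Rightarrow> nat)" "((x \<circ> \<sigma>) \<circ> \<rho>) \<longlonglongrightarrow> p"
      using bounded_imp_convergent_subsequence by blast
    define \<tau> where "\<tau> = \<sigma> \<circ> \<rho>"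
    have \<tau>: "strict_mono \<tau>" unfolding \<tau>_def using \<sigma>(1) \<rho>(1) by (rule strict_mono_o)
    have xt: "(\<lambda>n. x (\<tau> n)) \<longlonglongrightarrow> p" using \<rho>(2) by (simp add: \<tau>_def comp_def)
    have pF: "p \<in> ?F"
    proof -
      have "(\<lambda>n. infdist (x (\<tau> n)) ?F) \<longlonglongrightarrow> 0"
        using LIMSEQ_subseq_LIMSEQ[OF dF \<tau>] by (simp add: comp_def)
      moreover have "(\<lambda>n. infdist (x (\<tau> n)) ?F) \<longlonglongrightarrow> infdist p ?F"
        by (intro tendsto_intros xt)
      ultimately have "infdist p ?F = 0" using LIMSEQ_unique by blast
      then show ?thesis using in_closed_iff_infdist_zero[OF Fc(1) Fne] by simp
    qed
    have Tc: "continuous_on UNIV T" by (rule nonexp_cont[OF Tn])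
    have Txt: "(\<lambda>n. T (x (\<tau> n))) \<longlonglongrightarrow> T p"
      by (rule continuous_on_tendsto_compose[OF Tc xt]) auto
    have pvi: "(p - T p) \<bullet> (y - p) \<ge> 0" if y: "y \<in> ?F" for y
    proof -
      have l1: "(\<lambda>n. (x (\<tau> n) - T (x (\<tau> n))) \<bullet> (x (\<tau> n) - y)) \<longlonglongrightarrow> (p - T p) \<bullet> (p - y)"
        by (intro tendsto_intros xt Txt)
      have l2: "(\<lambda>n. e y (\<tau> n)) \<longlonglongrightarrow> 0" using LIMSEQ_subseq_LIMSEQ[OF elim \<tau>] by (simp add: comp_def)
      have "(p - T p) \<bullet> (p - y) \<le> 0"
        by (rule LIMSEQ_le[OF l1 l2]) (use ebound[OF y] in auto)
      moreover have "(p - T p) \<bullet> (y - p) = - ((p - T p) \<bullet> (p - y))" by (simp add: inner_diff_right)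
      ultimately show ?thesis by linarith
    qed
    have pO: "p \<in> Om" unfolding OmD using pF pvi by auto
    have "(S xs - xs) \<bullet> (p - xs) \<ge> \<epsilon>"
    proof (rule LIMSEQ_le_const)
      show "(\<lambda>n. (S xs - xs) \<bullet> (x (\<tau> n) - xs)) \<longlonglongrightarrow> (S xs - xs) \<bullet> (p - xs)"
        by (intro tendsto_intros xt)
      show "\<exists>N. \<forall>n\<ge>N. \<epsilon> \<le> (S xs - xs) \<bullet> (x (\<tau> n) - xs)"
        using \<sigma>(2) by (auto simp: \<tau>_def less_imp_le)
    qed
    moreover have "(xs - S xs) \<bullet> (p - xs) \<ge> 0" using xsvi pO by auto
    moreover have "(S xs - xs) \<bullet> (p - xs) = - ((xs - S xs) \<bullet> (p - xs))" by (simp add: inner_diff_left)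
    ultimately show False using ep by linarith
  qed
  define G where "G = norm (T xs - xs)"
  define C' where "C' = max C 0"
  define c where "c = 1 - r"
  have c: "0 < c" "c \<le> 1" using r by (auto simp: c_def)
  define E where "E k = (S xs - xs) \<bullet> (x (Suc k) - xs) + \<beta> k * G * C'" for k
  define s where "s k = (norm (x k - xs))\<^sup>2" for k
  define \<gamma> where "\<gamma> k = \<alpha> k * c" for k
  define \<delta> where "\<delta> k = 2 * E k / c" for k
  have s0: "0 \<le> s k" for k by (simp add: s_def)
  have g01: "0 \<le> \<gamma> k \<and> \<gamma> k \<le> 1" for k
  proof -
    have "\<alpha> k * c \<le> 1" using \<alpha>r[of k] c by (intro mult_le_one) auto
    then show ?thesis using \<alpha>r[of k] c by (auto simp: \<gamma>_def)
  qed
  have nsg: "\<not> summable \<gamma>"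
  proof
    assume "summable \<gamma>"
    then have "summable (\<lambda>n. (1 / c) * \<gamma> n)" by (rule summable_mult)
    moreover have "(\<lambda>n. (1 / c) * \<gamma> n) = \<alpha>" using c by (auto simp: \<gamma>_def)
    ultimately show False using ns by metis
  qed
  have rec: "eventually (\<lambda>k. s (Suc k) \<le> (1 - \<gamma> k) * s k + \<gamma> k * \<delta> k) sequentially"
    using A1
  proof (rule eventually_mono)
    fix k assume hk: "infdist (x (Suc k)) ?F \<le> C * \<alpha> k"
    define a where "a = \<alpha> k"
    define c1 where "c1 = (1 - \<alpha> k) * \<beta> k"
    define c2 where "c2 = (1 - \<alpha> k) * (1 - \<beta> k)"
    define X where "X = x k"
    define A where "A = x (Suc k) - xs"
    define b where "b = X - xs"
    define U where "U = a *\<^sub>R (S X - S xs) + c1 *\<^sub>R (T X - T xs) + c2 *\<^sub>R (W X - W xs)"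
    have ab: "0 < a" "a < 1" "0 < \<beta> k" "\<beta> k < 1" using \<alpha>r \<beta>r by (auto simp: a_def)
    have c1p: "c1 \<ge> 0" "c2 \<ge> 0" "c1 \<le> \<beta> k" using \<alpha>r[of k] \<beta>r[of k] by (auto simp: c1_def c2_def)
    have sum1: "a + c1 + c2 = 1" by (simp add: a_def c1_def c2_def algebra_simps)
    have "A = x (Suc k) - (a + c1 + c2) *\<^sub>R xs" using sum1 by (simp add: A_def)
    also have "\<dots> = U + a *\<^sub>R (S xs - xs) + c1 *\<^sub>R (T xs - xs) + c2 *\<^sub>R (W xs - xs)"
      unfolding iter[of k] U_def by (simp add: a_def c1_def c2_def X_def algebra_simps)
    finally have Ae: "A = U + a *\<^sub>R (S xs - xs) + c1 *\<^sub>R (T xs - xs)" using xsF by simp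
    have nU: "norm U \<le> (1 - a * c) * norm b"
    proof -
      have "norm U \<le> norm (a *\<^sub>R (S X - S xs)) + norm (c1 *\<^sub>R (T X - T xs)) + norm (c2 *\<^sub>R (W X - W xs))"
        unfolding U_def by (meson norm_triangle_le norm_triangle_ineq add_mono order_refl)
      also have "\<dots> = a * norm (S X - S xs) + c1 * norm (T X - T xs) + c2 * norm (W X - W xs)"
        using ab c1p by simp
      also have "\<dots> \<le> a * (r * norm (X - xs)) + c1 * norm (X - xs) + c2 * norm (X - xs)"
        using ab c1p Sc[of X xs] Tn[of X xs] Wn[of X xs] by (intro add_mono mult_left_mono) auto
      also have "\<dots> = (a * r + c1 + c2) * norm b" by (simp add: b_def algebra_simps)
      also have "a * r + c1 + c2 = 1 - a * c" using sum1 by (simp add: c_def algebra_simps)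
      finally show ?thesis .
    qed
    have c0: "0 \<le> 1 - a * c" "1 - a * c \<le> 1"
    proof -
      have "a * c \<le> 1" using ab c by (intro mult_le_one) auto
      then show "0 \<le> 1 - a * c" by simp
      show "1 - a * c \<le> 1" using ab c by simp
    qed
    have Tterm: "(T xs - xs) \<bullet> A \<le> G * (C' * a)"
    proof -
      define q where "q = closest_point ?F (x (Suc k))"
      have qF: "q \<in> ?F" unfolding q_def by (rule closest_point_in_set[OF Fc(1) Fne])
      have dq: "dist (x (Suc k)) q = infdist (x (Suc k)) ?F"
        unfolding q_def infdist_eq_setdist setdist_closest_point[OF Fc(1) Fne] ..
      have "(xs - T xs) \<bullet> (q - xs) \<ge> 0" using xsT qF by auto
      then have i1: "(T xs - xs) \<bullet> (q - xs) \<le> 0"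
        by (metis inner_minus_left minus_diff_eq neg_0_le_iff_le)
      have "(T xs - xs) \<bullet> (x (Suc k) - q) \<le> norm (T xs - xs) * norm (x (Suc k) - q)"
        by (rule norm_cauchy_schwarz)
      also have "\<dots> = G * infdist (x (Suc k)) ?F" using dq by (simp add: G_def dist_norm)
      also have "\<dots> \<le> G * (C' * a)"
      proof (intro mult_left_mono)
        have "C * \<alpha> k \<le> C' * a" using ab by (simp add: C'_def a_def mult_right_mono)
        then show "infdist (x (Suc k)) ?F \<le> C' * a" using hk by linarith
      qed (simp add: G_def)
      finally have i2: "(T xs - xs) \<bullet> (x (Suc k) - q) \<le> G * (C' * a)" .
      have "(T xs - xs) \<bullet> A = (T xs - xs) \<bullet> (q - xs) + (T xs - xs) \<bullet> (x (Suc k) - q)"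
        unfolding A_def by (simp add: inner_diff_right)
      then show ?thesis using i1 i2 by linarith
    qed
    have GC: "0 \<le> G * (C' * a)" using ab by (simp add: G_def C'_def)
    have t3: "c1 * ((T xs - xs) \<bullet> A) \<le> a * (\<beta> k * G * C')"
    proof -
      have "c1 * ((T xs - xs) \<bullet> A) \<le> c1 * (G * (C' * a))" using Tterm c1p by (intro mult_left_mono) auto
      also have "\<dots> \<le> \<beta> k * (G * (C' * a))" using c1p GC by (intro mult_right_mono) auto
      finally show ?thesis by (simp add: algebra_simps)
    qed
    have "A \<bullet> A = U \<bullet> A + a * ((S xs - xs) \<bullet> A) + c1 * ((T xs - xs) \<bullet> A)"
      by (subst (1) Ae) (simp add: inner_add_left)
    also have "U \<bullet> A \<le> (1 - a * c) * norm b * norm A"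
    proof -
      have "U \<bullet> A \<le> norm U * norm A" by (rule norm_cauchy_schwarz)
      also have "\<dots> \<le> (1 - a * c) * norm b * norm A" using nU by (simp add: mult_right_mono)
      finally show ?thesis .
    qed
    finally have q1: "A \<bullet> A \<le> (1 - a * c) * norm b * norm A + a * ((S xs - xs) \<bullet> A) + a * (\<beta> k * G * C')"
      using t3 by linarith
    have EA: "E k = (S xs - xs) \<bullet> A + \<beta> k * G * C'" by (simp add: E_def A_def)
    have aE: "a * E k = a * ((S xs - xs) \<bullet> A) + a * (\<beta> k * G * C')" unfolding EA by (simp add: distrib_left)
    have "A \<bullet> A = norm A ^ 2" by (simp add: dot_square_norm)
    then have q2: "norm A ^ 2 \<le> (1 - a * c) * norm b * norm A + a * E k"
      using q1 aE by linarith
    have sq: "2 * ((1 - a * c) * norm b * norm A) \<le> (1 - a * c) * (norm b)^2 + (norm A)^2"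
    proof -
      have "0 \<le> ((1 - a * c) * norm b - norm A)^2" by simp
      then have "2 * ((1 - a * c) * norm b * norm A) \<le> ((1 - a * c) * norm b)^2 + (norm A)^2"
        by (simp add: power2_eq_square algebra_simps)
      also have "((1 - a * c) * norm b)^2 = (1 - a * c)^2 * (norm b)^2" by (simp add: power_mult_distrib)
      also have "(1 - a * c)^2 * (norm b)^2 \<le> (1 - a * c) * (norm b)^2"
      proof (rule mult_right_mono)
        show "(1 - a * c)^2 \<le> 1 - a * c" using c0 by (simp add: power2_eq_square mult_left_le_one_le)
      qed simp
      finally show ?thesis by simp
    qed
    have "norm A ^ 2 \<le> (1 - a * c) * (norm b)^2 + 2 * a * E k" using q2 sq by linarith
    then show "s (Suc k) \<le> (1 - \<gamma> k) * s k + \<gamma> k * \<delta> k"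
      using c by (simp add: s_def \<gamma>_def \<delta>_def A_def b_def X_def a_def)
  qed
  have dl: "eventually (\<lambda>k. \<delta> k \<le> \<epsilon>) sequentially" if ep: "\<epsilon> > 0" for \<epsilon>
  proof -
    have e4: "c * \<epsilon> / 4 > 0" using ep c by simp
    have ev1: "eventually (\<lambda>k. (S xs - xs) \<bullet> (x (Suc k) - xs) \<le> c * \<epsilon> / 4) sequentially"
      using claim[OF e4] eventually_sequentially_Suc[of "\<lambda>k. (S xs - xs) \<bullet> (x k - xs) \<le> c * \<epsilon> / 4"] by blast
    have "(\<lambda>k. \<beta> k * G * C') \<longlonglongrightarrow> 0 * G * C'" by (intro tendsto_intros \<beta>lim)
    then have "(\<lambda>k. \<beta> k * G * C') \<longlonglongrightarrow> 0" by simp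
    from order_tendstoD(2)[OF this e4] have ev2: "eventually (\<lambda>k. \<beta> k * G * C' < c * \<epsilon> / 4) sequentially" .
    show ?thesis using eventually_conj[OF ev1 ev2]
    proof (rule eventually_mono)
      fix k assume h: "(S xs - xs) \<bullet> (x (Suc k) - xs) \<le> c * \<epsilon> / 4 \<and> \<beta> k * G * C' < c * \<epsilon> / 4"
      then have "E k \<le> c * \<epsilon> / 2" by (simp add: E_def)
      then have "2 * E k \<le> \<epsilon> * c" by (simp add: mult.commute)
      then show "\<delta> k \<le> \<epsilon>" using c by (simp add: \<delta>_def pos_divide_le_eq)
    qed
  qed
  have "s \<longlonglongrightarrow> 0" by (rule xu_lemma[OF s0 g01 nsg rec dl])
  then have "(\<lambda>k. sqrt (s k)) \<longlonglongrightarrow> sqrt 0" by (intro tendsto_intros)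
  then have "(\<lambda>k. norm (x k - xs)) \<longlonglongrightarrow> 0" by (simp add: s_def)
  then have "(\<lambda>k. x k - xs) \<longlonglongrightarrow> 0" by (rule tendsto_norm_zero_cancel)
  then have "x \<longlonglongrightarrow> xs" using Lim_null by blast
  then show ?thesis using xsO xsvi uniq by blast
qed


lemma line_deriv:
  fixes f :: "'a::real_inner \<Rightarrow> real"
  assumes d: "(f has_derivative (\<lambda>h. g \<bullet> h)) (at (x + t *\<^sub>R v))"
  shows "((\<lambda>a. f (x + a *\<^sub>R v)) has_real_derivative (g \<bullet> v)) (at t)"
proof -
  have l: "((\<lambda>a. x + a *\<^sub>R v) has_derivative (\<lambda>a. a *\<^sub>R v)) (at t)"
    by (auto intro!: derivative_eq_intros)
  have h: "((\<lambda>a. f (x + a *\<^sub>R v)) has_derivative (\<lambda>a. g \<bullet> (a *\<^sub>R v))) (at t)"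
    using has_derivative_compose[OF l d] .
  have e: "(\<lambda>a. g \<bullet> (a *\<^sub>R v)) = (*) (g \<bullet> v)" by (auto simp: fun_eq_iff mult.commute)
  show ?thesis unfolding has_field_derivative_def using h unfolding e .
qed

lemma dir_deriv_le:
  fixes f :: "'a::real_inner \<Rightarrow> real"
  assumes d: "(f has_derivative (\<lambda>h. g \<bullet> h)) (at x)"
    and b: "\<And>a. 0 < a \<Longrightarrow> a \<le> 1 \<Longrightarrow> (f (x + a *\<^sub>R v) - f x) / a \<le> K"
  shows "g \<bullet> v \<le> K"
proof -
  have "((\<lambda>a. f (x + a *\<^sub>R v)) has_real_derivative (g \<bullet> v)) (at 0)"
    using line_deriv[of f g x 0 v] d by simp
  then have "((\<lambda>h. (f (x + (0 + h) *\<^sub>R v) - f (x + 0 *\<^sub>R v)) / h) \<longlongrightarrow> g \<bullet> v) (at 0)"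
    unfolding DERIV_def by simp
  then have lim: "((\<lambda>h. (f (x + h *\<^sub>R v) - f x) / h) \<longlongrightarrow> g \<bullet> v) (at_right 0)"
    by (simp add: filterlim_at_split)
  have ev: "eventually (\<lambda>h. (f (x + h *\<^sub>R v) - f x) / h \<le> K) (at_right 0)"
    by (rule eventually_mono[OF eventually_at_right_real[of 0 1]]) (auto intro: b)
  show ?thesis by (rule tendsto_upperbound[OF lim ev]) simp
qed

lemma convex_grad_ineq:
  fixes f :: "'a::real_inner \<Rightarrow> real"
  assumes c: "convex_on UNIV f" and g: "is_gradient f gf"
  shows "f x + gf x \<bullet> (y - x) \<le> f y"
proof -
  have "gf x \<bullet> (y - x) \<le> f y - f x"
  proof (rule dir_deriv_le)
    show "(f has_derivative (\<lambda>h. gf x \<bullet> h)) (at x)" using g by (simp add: is_gradient_def)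
    fix a :: real assume a: "0 < a" "a \<le> 1"
    have "f ((1 - a) *\<^sub>R x + a *\<^sub>R y) \<le> (1 - a) * f x + a * f y"
      using c a by (intro convex_onD) auto
    moreover have "x + a *\<^sub>R (y - x) = (1 - a) *\<^sub>R x + a *\<^sub>R y" by (simp add: algebra_simps)
    ultimately have "f (x + a *\<^sub>R (y - x)) - f x \<le> a * (f y - f x)" by (simp add: algebra_simps)
    then show "(f (x + a *\<^sub>R (y - x)) - f x) / a \<le> f y - f x" using a by (simp add: divide_le_eq mult.commute)
  qed
  then show ?thesis by simp
qed

lemma descent_lemma:
  fixes f :: "'a::real_inner \<Rightarrow> real"
  assumes g: "is_gradient f gf" and L: "L-lipschitz_on UNIV gf"
  shows "f y \<le> f x + gf x \<bullet> (y - x) + L / 2 * (norm (y - x))^2"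
proof -
  define d where "d = y - x"
  define \<psi> where "\<psi> t = f (x + t *\<^sub>R d) - t * (gf x \<bullet> d) - L / 2 * t^2 * (norm d)^2" for t
  have "\<psi> 0 \<ge> \<psi> 1"
  proof (rule DERIV_nonpos_imp_nonincreasing[where f=\<psi> and a=0 and b=1])
    fix t :: real assume t: "0 \<le> t" "t \<le> 1"
    have fd: "((\<lambda>a. f (x + a *\<^sub>R d)) has_real_derivative (gf (x + t *\<^sub>R d) \<bullet> d)) (at t)"
      using line_deriv[of f "gf (x + t *\<^sub>R d)" x t d] g by (simp add: is_gradient_def)
    have "(\<psi> has_real_derivative (gf (x + t *\<^sub>R d) \<bullet> d - gf x \<bullet> d - L / 2 * (2 * t) * (norm d)^2)) (at t)"
      unfolding \<psi>_def[abs_def]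
      by (auto intro!: derivative_eq_intros fd simp: power2_eq_square)
    moreover have "gf (x + t *\<^sub>R d) \<bullet> d - gf x \<bullet> d - L / 2 * (2 * t) * (norm d)^2 \<le> 0"
    proof -
      have "gf (x + t *\<^sub>R d) \<bullet> d - gf x \<bullet> d = (gf (x + t *\<^sub>R d) - gf x) \<bullet> d" by (simp add: inner_diff_left)
      also have "\<dots> \<le> norm (gf (x + t *\<^sub>R d) - gf x) * norm d" by (rule norm_cauchy_schwarz)
      also have "norm (gf (x + t *\<^sub>R d) - gf x) \<le> L * norm (t *\<^sub>R d)"
        using lipschitz_onD[OF L, of "x + t *\<^sub>R d" x] by (simp add: dist_norm)
      then have "norm (gf (x + t *\<^sub>R d) - gf x) * norm d \<le> L * norm (t *\<^sub>R d) * norm d"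
        by (simp add: mult_right_mono)
      also have "L * norm (t *\<^sub>R d) * norm d = L / 2 * (2 * t) * (norm d)^2"
        using t by (simp add: power2_eq_square)
      finally show ?thesis by simp
    qed
    ultimately show "\<exists>y. (\<psi> has_real_derivative y) (at t) \<and> y \<le> 0" by blast
  qed simp
  then show ?thesis by (simp add: \<psi>_def d_def)
qed


lemma norm_sub_scale_sq:
  fixes d D :: "'a::real_inner"
  shows "(norm (d - t *\<^sub>R D))^2 = (norm d)^2 - 2 * t * (D \<bullet> d) + t^2 * (norm D)^2"
  unfolding power2_norm_eq_inner by (simp add: inner_diff_left inner_diff_right inner_commute power2_eq_square algebra_simps)

lemma BH_half:
  fixes f :: "'a::real_inner \<Rightarrow> real"
  assumes c: "convex_on UNIV f" and g: "is_gradient f gf" and L: "L-lipschitz_on UNIV gf" and Lp: "L > 0"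
  shows "f x + gf x \<bullet> (y - x) + 1 / (2 * L) * (norm (gf y - gf x))^2 \<le> f y"
proof -
  define v where "v = gf y - gf x"
  define z where "z = y - (1 / L) *\<^sub>R v"
  have a: "f x + gf x \<bullet> (z - x) \<le> f z" by (rule convex_grad_ineq[OF c g])
  have b: "f z \<le> f y + gf y \<bullet> (z - y) + L / 2 * (norm (z - y))^2" by (rule descent_lemma[OF g L])
  have zy: "z - y = - ((1 / L) *\<^sub>R v)" by (simp add: z_def)
  have "gf y \<bullet> (z - y) - gf x \<bullet> (z - y) = v \<bullet> (z - y)" by (simp add: v_def inner_diff_left)
  also have "\<dots> = - (1 / L) * (v \<bullet> v)" unfolding zy by simp
  also have "\<dots> = - (1 / L) * (norm v)^2" by (simp add: dot_square_norm)
  finally have e1: "gf y \<bullet> (z - y) - gf x \<bullet> (z - y) = - (1 / L) * (norm v)^2" .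
  have e2: "L / 2 * (norm (z - y))^2 = 1 / (2 * L) * (norm v)^2"
    unfolding zy using Lp by (simp add: power2_eq_square field_simps)
  have e3: "gf x \<bullet> (z - x) = gf x \<bullet> (z - y) + gf x \<bullet> (y - x)" by (simp add: inner_diff_right)
  from a b e1 e2 e3 show ?thesis by (simp add: v_def)
qed

lemma BH:
  fixes f :: "'a::real_inner \<Rightarrow> real"
  assumes c: "convex_on UNIV f" and g: "is_gradient f gf" and L: "L-lipschitz_on UNIV gf" and Lp: "L > 0"
  shows "1 / L * (norm (gf x - gf y))^2 \<le> (gf x - gf y) \<bullet> (x - y)"
proof -
  have h1: "f x + gf x \<bullet> (y - x) + 1 / (2 * L) * (norm (gf y - gf x))^2 \<le> f y" by (rule BH_half[OF c g L Lp])
  have h2: "f y + gf y \<bullet> (x - y) + 1 / (2 * L) * (norm (gf x - gf y))^2 \<le> f x" by (rule BH_half[OF c g L Lp])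
  have n: "1 / (2 * L) * (norm (gf y - gf x))^2 = 1 / (2 * L) * (norm (gf x - gf y))^2" by (simp add: norm_minus_commute)
  have i: "gf x \<bullet> (y - x) + gf y \<bullet> (x - y) = - ((gf x - gf y) \<bullet> (x - y))"
    by (simp add: inner_diff_left inner_diff_right)
  have "1 / L * (norm (gf x - gf y))^2 = 2 * (1 / (2 * L) * (norm (gf x - gf y))^2)" by simp
  with h1 h2 n i show ?thesis by linarith
qed

lemma grad_step_nonexp:
  fixes f :: "'a::real_inner \<Rightarrow> real"
  assumes c: "convex_on UNIV f" and g: "is_gradient f gf" and L: "L-lipschitz_on UNIV gf" and Lp: "L > 0"
    and t: "0 \<le> t" "t \<le> 2 / L"
  shows "norm ((a - t *\<^sub>R gf a) - (b - t *\<^sub>R gf b)) \<le> norm (a - b)"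
proof -
  define d where "d = a - b"
  define \<Delta> where "\<Delta> = gf a - gf b"
  have bh: "1 / L * (norm \<Delta>)^2 \<le> \<Delta> \<bullet> d" unfolding \<Delta>_def d_def by (rule BH[OF c g L Lp])
  have e: "(a - t *\<^sub>R gf a) - (b - t *\<^sub>R gf b) = d - t *\<^sub>R \<Delta>" by (simp add: d_def \<Delta>_def algebra_simps)
  have "(norm (d - t *\<^sub>R \<Delta>))^2 = (norm d)^2 - 2 * t * (\<Delta> \<bullet> d) + t^2 * (norm \<Delta>)^2"
    by (rule norm_sub_scale_sq)
  also have "\<dots> \<le> (norm d)^2 - 2 * t * (1 / L * (norm \<Delta>)^2) + t^2 * (norm \<Delta>)^2"
  proof -
    have "2 * t * (1 / L * (norm \<Delta>)^2) \<le> 2 * t * (\<Delta> \<bullet> d)" using bh t by (intro mult_left_mono) auto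
    then show ?thesis by linarith
  qed
  also have "\<dots> = (norm d)^2 - t * (2 / L - t) * (norm \<Delta>)^2" by (simp add: algebra_simps power2_eq_square)
  also have "\<dots> \<le> (norm d)^2" using t by simp
  finally have "(norm (d - t *\<^sub>R \<Delta>))^2 \<le> (norm d)^2" .
  then have "norm (d - t *\<^sub>R \<Delta>) \<le> norm d" by (simp add: power2_le_iff_abs_le)
  then show ?thesis by (simp add: e d_def)
qed

lemma dir_deriv_le2:
  fixes f :: "'a::real_inner \<Rightarrow> real"
  assumes d: "(f has_derivative (\<lambda>h. g \<bullet> h)) (at x)"
    and b: "\<And>a. 0 < a \<Longrightarrow> a \<le> 1 \<Longrightarrow> (f (x + a *\<^sub>R v) - f x) / a \<le> K + a * KK"
  shows "g \<bullet> v \<le> K"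
proof -
  have "((\<lambda>a. f (x + a *\<^sub>R v)) has_real_derivative (g \<bullet> v)) (at 0)"
    using line_deriv[of f g x 0 v] d by simp
  then have "((\<lambda>h. (f (x + (0 + h) *\<^sub>R v) - f (x + 0 *\<^sub>R v)) / h) \<longlongrightarrow> g \<bullet> v) (at 0)"
    unfolding DERIV_def by simp
  then have lim: "((\<lambda>h. (f (x + h *\<^sub>R v) - f x) / h) \<longlongrightarrow> g \<bullet> v) (at_right 0)"
    by (simp add: filterlim_at_split)
  have lim2: "((\<lambda>h. K + h * KK) \<longlongrightarrow> K + 0 * KK) (at_right 0)"
    by (intro tendsto_intros)
  have ev: "eventually (\<lambda>h. (f (x + h *\<^sub>R v) - f x) / h \<le> K + h * KK) (at_right 0)"
    by (rule eventually_mono[OF eventually_at_right_real[of 0 1]]) (auto intro: b)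
  have "g \<bullet> v \<le> K + 0 * KK" by (rule tendsto_le[OF _ lim2 lim ev]) simp
  then show ?thesis by simp
qed

lemma sc_convex:
  assumes "strongly_convex \<mu> w" "\<mu> \<ge> 0"
  shows "convex_on UNIV w"
proof (rule convex_onI)
  fix t :: real and x y assume t: "0 < t" "t < 1"
  have "w ((1 - t) *\<^sub>R x + t *\<^sub>R y) \<le> (1 - t) * w x + t * w y - \<mu> / 2 * t * (1 - t) * (norm (x - y))\<^sup>2"
    using assms(1) t unfolding strongly_convex_def by auto
  moreover have "\<mu> / 2 * t * (1 - t) * (norm (x - y))\<^sup>2 \<ge> 0" using t assms(2) by simp
  ultimately show "w ((1 - t) *\<^sub>R x + t *\<^sub>R y) \<le> (1 - t) * w x + t * w y" by linarith
qed simp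

lemma alg_sc: "(1 - a) * X + a * Y - m * a * (1 - a) * N - X = a * (Y - X - m * N + a * (m * N))" for a X Y m N :: real
  by (simp add: algebra_simps)

lemma sc_grad_ineq:
  fixes w :: "'a::real_inner \<Rightarrow> real"
  assumes sc: "strongly_convex \<mu> w" and g: "is_gradient w gw"
  shows "w x + gw x \<bullet> (y - x) + \<mu> / 2 * (norm (y - x))^2 \<le> w y"
proof -
  have "gw x \<bullet> (y - x) \<le> w y - w x - \<mu> / 2 * (norm (y - x))^2"
  proof (rule dir_deriv_le2[where KK = "\<mu> / 2 * (norm (y - x))^2"])
    show "(w has_derivative (\<lambda>h. gw x \<bullet> h)) (at x)" using g by (simp add: is_gradient_def)
    fix a :: real assume a: "0 < a" "a \<le> 1"
    define N where "N = (norm (y - x))^2"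
    have "w ((1 - a) *\<^sub>R x + a *\<^sub>R y) \<le> (1 - a) * w x + a * w y - \<mu> / 2 * a * (1 - a) * (norm (x - y))^2"
      using sc a unfolding strongly_convex_def by auto
    then have h: "w ((1 - a) *\<^sub>R x + a *\<^sub>R y) \<le> (1 - a) * w x + a * w y - \<mu> / 2 * a * (1 - a) * N"
      unfolding N_def by (simp add: norm_minus_commute)
    have "x + a *\<^sub>R (y - x) = (1 - a) *\<^sub>R x + a *\<^sub>R y" by (simp add: algebra_simps)
    then have z: "w (x + a *\<^sub>R (y - x)) = w ((1 - a) *\<^sub>R x + a *\<^sub>R y)" by simp
    have alg: "(1 - a) * w x + a * w y - \<mu> / 2 * a * (1 - a) * N - w x = a * (w y - w x - \<mu> / 2 * N + a * (\<mu> / 2 * N))"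
      by (rule alg_sc)
    have "w (x + a *\<^sub>R (y - x)) - w x \<le> a * (w y - w x - \<mu> / 2 * (norm (y - x))^2 + a * (\<mu> / 2 * (norm (y - x))^2))"
      using h z alg unfolding N_def by linarith
    then show "(w (x + a *\<^sub>R (y - x)) - w x) / a \<le> w y - w x - \<mu> / 2 * (norm (y - x))^2 + a * (\<mu> / 2 * (norm (y - x))^2)"
      using a by (simp add: divide_le_eq mult.commute)
  qed
  then show ?thesis by simp
qed

lemma sc_mono:
  fixes w :: "'a::real_inner \<Rightarrow> real"
  assumes sc: "strongly_convex \<mu> w" and g: "is_gradient w gw"
  shows "\<mu> * (norm (x - y))^2 \<le> (gw x - gw y) \<bullet> (x - y)"
proof -
  have h1: "w x + gw x \<bullet> (y - x) + \<mu> / 2 * (norm (y - x))^2 \<le> w y" by (rule sc_grad_ineq[OF sc g])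
  have h2: "w y + gw y \<bullet> (x - y) + \<mu> / 2 * (norm (x - y))^2 \<le> w x" by (rule sc_grad_ineq[OF sc g])
  have n: "\<mu> / 2 * (norm (y - x))^2 = \<mu> / 2 * (norm (x - y))^2" by (simp add: norm_minus_commute)
  have i: "gw x \<bullet> (y - x) + gw y \<bullet> (x - y) = - ((gw x - gw y) \<bullet> (x - y))"
    by (simp add: inner_diff_left inner_diff_right)
  from h1 h2 n i show ?thesis by linarith
qed

lemma contr_alg:
  fixes u L \<theta> \<mu> N D :: real
  assumes "L > 0" "\<theta> = u * L / 2"
  shows "N - 2 * u * (\<theta> * (1 / L * D) + (1 - \<theta>) * (\<mu> * N)) + u^2 * D = (1 - 2 * u * (1 - \<theta>) * \<mu>) * N"
proof -
  have "2 * u * (\<theta> * (1 / L * D)) = u * (2 * \<theta>) * D / L" by simp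
  also have "\<dots> = u * (u * L) * D / L" using assms(2) by (simp only: mult_2 field_sum_of_halves)
  also have "\<dots> = u^2 * D" using assms by (simp add: power2_eq_square)
  finally have "2 * u * (\<theta> * (1 / L * D)) = u^2 * D" .
  then show ?thesis by (simp add: algebra_simps)
qed

lemma S_contraction:
  fixes w :: "'a::real_inner \<Rightarrow> real"
  assumes sc: "strongly_convex \<mu> w" and g: "is_gradient w gw" and \<mu>: "\<mu> > 0"
    and L: "L-lipschitz_on UNIV gw" and Lp: "L > 0"
    and u: "0 < u" "u \<le> 2 / (L + \<mu>)"
  shows "\<exists>r. 0 \<le> r \<and> r < 1 \<and> (\<forall>a b. norm ((a - u *\<^sub>R gw a) - (b - u *\<^sub>R gw b)) \<le> r * norm (a - b))"
proof -
  have cv: "convex_on UNIV w" by (rule sc_convex[OF sc]) (use \<mu> in simp)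
  define \<theta> where "\<theta> = u * L / 2"
  have "u * L \<le> (2 / (L + \<mu>)) * L" using u Lp by (intro mult_right_mono) auto
  then have uL: "u * L \<le> 2 * L / (L + \<mu>)" by simp
  have Lm: "2 * L / (L + \<mu>) < 2" using Lp \<mu> by (simp add: divide_less_eq)
  have th: "0 < \<theta>" "\<theta> < 1"
  proof -
    show "0 < \<theta>" using u Lp unfolding \<theta>_def by simp
    have "u * L < 2" using uL Lm by linarith
    then show "\<theta> < 1" unfolding \<theta>_def by simp
  qed
  define q where "q = 1 - 2 * u * (1 - \<theta>) * \<mu>"
  have "0 < 2 * u * (1 - \<theta>) * \<mu>" using u th \<mu> by (intro mult_pos_pos) auto
  then have q1: "q < 1" unfolding q_def by linarith
  define r where "r = sqrt (max 0 q)"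
  have "max 0 q < 1" using q1 by simp
  then have r: "0 \<le> r" "r < 1" unfolding r_def by (auto simp: real_sqrt_lt_1_iff)
  have "norm ((a - u *\<^sub>R gw a) - (b - u *\<^sub>R gw b)) \<le> r * norm (a - b)" for a b
  proof -
    define d where "d = a - b"
    define \<Delta> where "\<Delta> = gw a - gw b"
    have bh: "1 / L * (norm \<Delta>)^2 \<le> \<Delta> \<bullet> d" unfolding \<Delta>_def d_def by (rule BH[OF cv g L Lp])
    have sm: "\<mu> * (norm d)^2 \<le> \<Delta> \<bullet> d" unfolding \<Delta>_def d_def by (rule sc_mono[OF sc g])
    have comb: "\<theta> * (1 / L * (norm \<Delta>)^2) + (1 - \<theta>) * (\<mu> * (norm d)^2) \<le> \<Delta> \<bullet> d"
    proof -
      have "\<theta> * (1 / L * (norm \<Delta>)^2) \<le> \<theta> * (\<Delta> \<bullet> d)" using bh th by (intro mult_left_mono) auto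
      moreover have "(1 - \<theta>) * (\<mu> * (norm d)^2) \<le> (1 - \<theta>) * (\<Delta> \<bullet> d)" using sm th by (intro mult_left_mono) auto
      moreover have "\<theta> * (\<Delta> \<bullet> d) + (1 - \<theta>) * (\<Delta> \<bullet> d) = \<Delta> \<bullet> d" by (simp add: algebra_simps)
      ultimately show ?thesis by linarith
    qed
    have e: "(a - u *\<^sub>R gw a) - (b - u *\<^sub>R gw b) = d - u *\<^sub>R \<Delta>" by (simp add: d_def \<Delta>_def algebra_simps)
    have "(norm (d - u *\<^sub>R \<Delta>))^2 = (norm d)^2 - 2 * u * (\<Delta> \<bullet> d) + u^2 * (norm \<Delta>)^2"
      by (rule norm_sub_scale_sq)
    also have "\<dots> \<le> (norm d)^2 - 2 * u * (\<theta> * (1 / L * (norm \<Delta>)^2) + (1 - \<theta>) * (\<mu> * (norm d)^2)) + u^2 * (norm \<Delta>)^2"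
    proof -
      have "2 * u * (\<theta> * (1 / L * (norm \<Delta>)^2) + (1 - \<theta>) * (\<mu> * (norm d)^2)) \<le> 2 * u * (\<Delta> \<bullet> d)"
        using comb u by (intro mult_left_mono) auto
      then show ?thesis by linarith
    qed
    also have "\<dots> = q * (norm d)^2"
      unfolding q_def by (rule contr_alg) (use Lp in \<open>auto simp: \<theta>_def\<close>)
    also have "\<dots> \<le> (max 0 q) * (norm d)^2" by (intro mult_right_mono) auto
    also have "\<dots> = (r * norm d)^2" by (simp add: r_def power_mult_distrib)
    finally have "(norm (d - u *\<^sub>R \<Delta>))^2 \<le> (r * norm d)^2" .
    moreover have "0 \<le> r * norm d" using r by simp
    ultimately have "norm (d - u *\<^sub>R \<Delta>) \<le> r * norm d" by (rule power2_le_imp_le)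
    then show ?thesis by (simp add: e d_def)
  qed
  then show ?thesis using r by blast
qed


lemma lsc_seq:
  assumes l: "lsc_fun g" and y: "y \<longlonglongrightarrow> p" and ev: "eventually (\<lambda>n. g (y n) \<le> b) sequentially"
  shows "g p \<le> b"
proof -
  have "closed {x. g x \<le> b}" using l by (simp add: lsc_fun_def)
  from Lim_in_closed_set[OF this _ _ y] ev show ?thesis by simp
qed

lemma lsc_bounded_below_compact:
  fixes g :: "'a::metric_space \<Rightarrow> ereal"
  assumes l: "lsc_fun g" and p: "\<forall>x. g x \<noteq> -\<infinity>" and K: "compact K"
  shows "\<exists>m::real. \<forall>x\<in>K. ereal m \<le> g x"
proof (rule ccontr)
  assume "\<not> ?thesis"
  then have "\<forall>n::nat. \<exists>x\<in>K. g x < ereal (- real n)" by (meson not_le)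
  then obtain y where y: "\<And>n. y n \<in> K" "\<And>n. g (y n) < ereal (- real n)" by metis
  obtain l r where lr: "l \<in> K" "strict_mono (r :: nat \<Rightarrow> nat)" "(y \<circ> r) \<longlonglongrightarrow> l"
    using seq_compactE[OF compact_imp_seq_compact[OF K], of y] y(1) by blast
  have "g l \<le> ereal (- real m)" for m
  proof (rule lsc_seq[OF l lr(3)])
    show "eventually (\<lambda>n. g ((y \<circ> r) n) \<le> ereal (- real m)) sequentially"
      unfolding eventually_sequentially
    proof (intro exI allI impI)
      fix n assume "m \<le> n"
      then have "m \<le> r n" using seq_suble[OF lr(2), of n] by linarith
      then have b: "ereal (- real (r n)) \<le> ereal (- real m)" by simp
      have a: "g (y (r n)) \<le> ereal (- real (r n))" using y(2)[of "r n"] by (rule less_imp_le)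
      show "g ((y \<circ> r) n) \<le> ereal (- real m)" using order.trans[OF a b] by simp
    qed
  qed
  note H = this
  show False
  proof (cases "g l")
    case (real v)
    obtain m :: nat where "real m > - v" using reals_Archimedean2 by blast
    with H[of m] real show False by simp
  next
    case PInf with H[of 0] show False by simp
  next
    case MInf with p show False by simp
  qed
qed



lemma convex_lower_affine:
  fixes g :: "'a::euclidean_space \<Rightarrow> ereal"
  assumes l: "lsc_fun g" and p: "\<forall>x. g x \<noteq> -\<infinity>" and c: "convex_fun g" and g0: "g v0 = ereal g0"
  shows "\<exists>D\<ge>0. \<forall>v. ereal (g0 - D * (1 + norm (v - v0))) \<le> g v"
proof -
  obtain m where m: "\<forall>x\<in>cball v0 1. ereal m \<le> g x"
    using lsc_bounded_below_compact[OF l p compact_cball] by blast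
  define m' where "m' = min m g0"
  define D where "D = g0 - m'"
  have D: "D \<ge> 0" by (simp add: D_def m'_def)
  have m': "\<forall>x\<in>cball v0 1. ereal m' \<le> g x" using m by (auto simp: m'_def intro: order.trans[rotated])
  have "ereal (g0 - D * (1 + norm (v - v0))) \<le> g v" for v
  proof (cases "norm (v - v0) \<le> 1")
    case True
    then have "v \<in> cball v0 1" by (simp add: dist_norm norm_minus_commute)
    then have "ereal m' \<le> g v" using m' by blast
    moreover have "g0 - D * (1 + norm (v - v0)) \<le> m'"
    proof -
      have "D * norm (v - v0) \<ge> 0" using D by simp
      moreover have "g0 - D * (1 + norm (v - v0)) = m' - D * norm (v - v0)" by (simp add: D_def algebra_simps)
      ultimately show ?thesis by linarith
    qed
    ultimately show ?thesis by (meson ereal_less_eq(3) order.trans)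
  next
    case False
    define R where "R = norm (v - v0)"
    have R: "R > 1" using False by (simp add: R_def)
    define w where "w = (1 - 1 / R) *\<^sub>R v0 + (1 / R) *\<^sub>R v"
    have "w - v0 = (1 / R) *\<^sub>R (v - v0)" by (simp add: w_def algebra_simps)
    then have "norm (w - v0) = (1 / R) * R" using R by (simp add: R_def)
    then have "norm (w - v0) = 1" using R by simp
    then have "w \<in> cball v0 1" by (simp add: dist_norm norm_minus_commute)
    then have gw: "ereal m' \<le> g w" using m' by blast
    have cv: "g w \<le> ereal (1 - 1 / R) * g v0 + ereal (1 / R) * g v"
      unfolding w_def using c R unfolding convex_fun_def by auto
    show ?thesis
    proof (cases "g v")
      case (real V)
      have "g w \<le> ereal ((1 - 1 / R) * g0 + (1 / R) * V)" using cv g0 real by simp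
      then have "ereal m' \<le> ereal ((1 - 1 / R) * g0 + (1 / R) * V)" using gw by (rule order.trans[rotated])
      then have h: "m' \<le> (1 - 1 / R) * g0 + (1 / R) * V" by simp
      have "R * m' \<le> R * ((1 - 1 / R) * g0 + (1 / R) * V)" using h R by (intro mult_left_mono) auto
      also have "\<dots> = (R - 1) * g0 + V" using R by (simp add: field_simps)
      finally have "g0 - R * D \<le> V" by (simp add: D_def algebra_simps)
      moreover have "g0 - D * (1 + R) \<le> g0 - R * D" using D by (simp add: algebra_simps)
      ultimately show ?thesis using real by (simp add: R_def)
    next
      case PInf then show ?thesis by simp
    next
      case MInf then show ?thesis using p by simp
    qed
  qed
  then show ?thesis using D by blast
qed

lemma sq_lower: "(t::real)^2 / 2 - k * t \<ge> - (k^2 / 2)"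
proof -
  have "0 \<le> (t - k)^2" by simp
  then show ?thesis by (simp add: power2_eq_square algebra_simps)
qed

lemma prox_min_exists:
  fixes g :: "'a::euclidean_space \<Rightarrow> ereal"
  assumes l: "lsc_fun g" and pr: "proper_fun g" and cvx: "convex_fun g" and c: "c > 0"
  shows "\<exists>p. \<forall>v. ereal c * g p + ereal ((norm (p - z))\<^sup>2 / 2) \<le> ereal c * g v + ereal ((norm (v - z))\<^sup>2 / 2)"
proof -
  define N where "N v = (norm (v - z))\<^sup>2 / 2" for v
  define h where "h v = ereal c * g v + ereal (N v)" for v
  have p: "\<forall>x. g x \<noteq> -\<infinity>" using pr by (simp add: proper_fun_def)
  obtain v0 where v0: "g v0 \<noteq> \<infinity>" using pr by (auto simp: proper_fun_def)
  obtain g0 where g0: "g v0 = ereal g0" using v0 p by (cases "g v0") auto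
  obtain D where D: "D \<ge> 0" "\<And>v. ereal (g0 - D * (1 + norm (v - v0))) \<le> g v"
    using convex_lower_affine[OF l p cvx g0] by blast
  define \<phi> where "\<phi> v = c * (g0 - D * (1 + norm (v - v0))) + N v" for v
  have hphi: "ereal (\<phi> v) \<le> h v" for v
  proof -
    have "ereal c * ereal (g0 - D * (1 + norm (v - v0))) \<le> ereal c * g v"
      using D(2)[of v] c by (intro ereal_mult_left_mono) auto
    then have "ereal c * ereal (g0 - D * (1 + norm (v - v0))) + ereal (N v) \<le> ereal c * g v + ereal (N v)"
      by (rule add_right_mono)
    then show ?thesis unfolding h_def \<phi>_def by simp
  qed
  define \<phi>0 where "\<phi>0 = c * g0 - c * D - c * D * norm (z - v0) - (c * D)^2 / 2"
  have phib: "\<phi>0 \<le> \<phi> v" for v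
  proof -
    have tri: "norm (v - v0) \<le> norm (v - z) + norm (z - v0)"
      using norm_triangle_ineq[of "v - z" "z - v0"] by simp
    have "c * D * norm (v - v0) \<le> c * D * (norm (v - z) + norm (z - v0))"
      using tri c D by (intro mult_left_mono) auto
    moreover have "(norm (v - z))^2 / 2 - (c * D) * norm (v - z) \<ge> - ((c * D)^2 / 2)" by (rule sq_lower)
    ultimately show ?thesis unfolding \<phi>_def \<phi>0_def N_def by (simp add: algebra_simps)
  qed
  define mh where "mh = (INF v. h v)"
  have mh_le: "mh \<le> h v" for v unfolding mh_def by (rule INF_lower) simp
  have mh_ge: "ereal \<phi>0 \<le> mh" unfolding mh_def
  proof (rule INF_greatest)
    fix v :: 'a
    have "ereal \<phi>0 \<le> ereal (\<phi> v)" using phib[of v] by simp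
    then show "ereal \<phi>0 \<le> h v" using hphi[of v] by (rule order.trans)
  qed
  have "h v0 = ereal (c * g0 + N v0)" by (simp add: h_def g0)
  then have "mh \<noteq> \<infinity>" using mh_le[of v0] by auto
  moreover have "mh \<noteq> -\<infinity>" using mh_ge by auto
  ultimately obtain mr where mr: "mh = ereal mr" by (cases mh) auto
  have "\<forall>n. \<exists>v. h v < ereal (mr + inverse (real (Suc n)))"
  proof
    fix n
    have "mh < ereal (mr + inverse (real (Suc n)))" using mr by simp
    then show "\<exists>v. h v < ereal (mr + inverse (real (Suc n)))" unfolding mh_def by (simp add: INF_less_iff)
  qed
  then obtain y where y: "\<And>n. h (y n) < ereal (mr + inverse (real (Suc n)))" by metis
  define G where "G n = real_of_ereal (g (y n))" for n
  have gy: "g (y n) = ereal (G n)" for n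
  proof -
    have "g (y n) \<noteq> \<infinity>"
    proof
      assume "g (y n) = \<infinity>"
      then have "h (y n) = \<infinity>" using c by (simp add: h_def)
      then show False using y[of n] by simp
    qed
    then show ?thesis using p by (cases "g (y n)") (auto simp: G_def)
  qed
  have yb: "c * G n + N (y n) < mr + inverse (real (Suc n))" for n
    using y[of n] by (simp add: h_def gy)
  have yphi: "\<phi> (y n) \<le> c * G n + N (y n)" for n
    using hphi[of "y n"] by (simp add: h_def gy)
  define K1 where "K1 = mr + 1 - c * g0 + c * D + c * D * norm (z - v0)"
  have bnd: "norm (y n - z) \<le> max 1 (2 * (\<bar>K1\<bar> + c * D))" for n
  proof -
    define t where "t = norm (y n - z)"
    have "inverse (real (Suc n)) \<le> 1" by (simp add: inverse_le_1_iff)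
    then have "\<phi> (y n) < mr + 1" using yb[of n] yphi[of n] by linarith
    moreover have "norm (y n - v0) \<le> t + norm (z - v0)"
      using norm_triangle_ineq[of "y n - z" "z - v0"] by (simp add: t_def)
    then have "c * D * norm (y n - v0) \<le> c * D * (t + norm (z - v0))"
      using c D by (intro mult_left_mono) auto
    ultimately have tt: "t^2 / 2 - c * D * t \<le> K1"
      unfolding \<phi>_def K1_def N_def t_def by (simp add: algebra_simps)
    show ?thesis
    proof (cases "t \<le> 1")
      case True then show ?thesis by (simp add: t_def)
    next
      case False
      have k: "\<bar>K1\<bar> * 1 \<le> \<bar>K1\<bar> * t" using False by (intro mult_left_mono) auto
      have e: "(\<bar>K1\<bar> + c * D) * t = \<bar>K1\<bar> * t + c * D * t" by (simp add: algebra_simps)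
      have "t^2 / 2 \<le> (\<bar>K1\<bar> + c * D) * t" using tt k e abs_ge_self[of K1] by linarith
      then have "t * t \<le> (2 * (\<bar>K1\<bar> + c * D)) * t" by (simp add: power2_eq_square algebra_simps)
      then have "t \<le> 2 * (\<bar>K1\<bar> + c * D)" using False by simp
      then show ?thesis by (simp add: t_def)
    qed
  qed
  have "bounded (range y)"
  proof -
    have "norm (y n) \<le> norm z + max 1 (2 * (\<bar>K1\<bar> + c * D))" for n
      using bnd[of n] norm_triangle_ineq[of "y n - z" z] by simp
    then show ?thesis unfolding bounded_iff by blast
  qed
  then obtain pt \<sigma> where \<sigma>: "strict_mono (\<sigma> :: nat \<Rightarrow> nat)" "(y \<circ> \<sigma>) \<longlonglongrightarrow> pt"
    using bounded_imp_convergent_subsequence by blast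
  define b where "b = (mr - N pt) / c"
  have Gb: "g pt \<le> ereal (b + \<epsilon>)" if ep: "\<epsilon> > 0" for \<epsilon>
  proof (rule lsc_seq[OF l \<sigma>(2)])
    have l1: "(\<lambda>n. inverse (real (Suc (\<sigma> n)))) \<longlonglongrightarrow> 0"
      using LIMSEQ_subseq_LIMSEQ[OF LIMSEQ_inverse_real_of_nat \<sigma>(1)] by (simp add: comp_def)
    have l2: "(\<lambda>n. N (y (\<sigma> n))) \<longlonglongrightarrow> N pt"
    proof -
      have "(\<lambda>n. y (\<sigma> n)) \<longlonglongrightarrow> pt" using \<sigma>(2) by (simp add: comp_def)
      then have "(\<lambda>n. (norm (y (\<sigma> n) - z))\<^sup>2) \<longlonglongrightarrow> (norm (pt - z))\<^sup>2" by (intro tendsto_intros)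
      then have "(\<lambda>n. (norm (y (\<sigma> n) - z))\<^sup>2 / 2) \<longlonglongrightarrow> (norm (pt - z))\<^sup>2 / 2" by (intro tendsto_divide tendsto_const) simp_all
      then show ?thesis by (simp add: N_def)
    qed
    have "(\<lambda>n. (mr + inverse (real (Suc (\<sigma> n))) - N (y (\<sigma> n))) / c) \<longlonglongrightarrow> (mr + 0 - N pt) / c"
      by (intro tendsto_intros l1 l2) (use c in auto)
    then have "(\<lambda>n. (mr + inverse (real (Suc (\<sigma> n))) - N (y (\<sigma> n))) / c) \<longlonglongrightarrow> b" by (simp add: b_def)
    from order_tendstoD(2)[OF this, of "b + \<epsilon>"] ep
    have ev: "eventually (\<lambda>n. (mr + inverse (real (Suc (\<sigma> n))) - N (y (\<sigma> n))) / c < b + \<epsilon>) sequentially" by simp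
    show "eventually (\<lambda>n. g ((y \<circ> \<sigma>) n) \<le> ereal (b + \<epsilon>)) sequentially"
      using ev
    proof (rule eventually_mono)
      fix n assume hn: "(mr + inverse (real (Suc (\<sigma> n))) - N (y (\<sigma> n))) / c < b + \<epsilon>"
      define Q where "Q = mr + inverse (real (Suc (\<sigma> n))) - N (y (\<sigma> n))"
      have "c * G (\<sigma> n) < Q" using yb[of "\<sigma> n"] unfolding Q_def by linarith
      then have "G (\<sigma> n) < Q / c" using c by (simp add: pos_less_divide_eq mult.commute)
      then have "G (\<sigma> n) < (mr + inverse (real (Suc (\<sigma> n))) - N (y (\<sigma> n))) / c" by (simp add: Q_def)
      then show "g ((y \<circ> \<sigma>) n) \<le> ereal (b + \<epsilon>)" using hn gy[of "\<sigma> n"] by simp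
    qed
  qed
  have "g pt \<noteq> \<infinity>" using Gb[of 1] by auto
  then obtain P where P: "g pt = ereal P" using p by (cases "g pt") auto
  have "P \<le> b" by (rule field_le_epsilon) (use Gb P in auto)
  then have "c * P + N pt \<le> mr" using c by (simp add: b_def field_simps)
  then have "h pt \<le> mh" by (simp add: h_def P mr)
  then have "\<forall>v. h pt \<le> h v" using mh_le order.trans by blast
  then show ?thesis unfolding h_def N_def by blast
qed


lemma small_param:
  fixes X Y Z :: real
  assumes Z: "Z \<ge> 0" and h: "\<And>a. 0 < a \<Longrightarrow> a \<le> 1 \<Longrightarrow> X \<le> Y + a * Z"
  shows "X \<le> Y"
proof (rule field_le_epsilon)
  fix e :: real assume e: "0 < e"
  define a where "a = min 1 (e / (Z + 1))"
  have a: "0 < a" "a \<le> 1" using e Z by (auto simp: a_def)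
  have "a * Z \<le> (e / (Z + 1)) * Z" using Z by (intro mult_right_mono) (auto simp: a_def)
  also have "\<dots> \<le> e" using e Z by (simp add: field_simps)
  finally show "X \<le> Y + e" using h[OF a] by linarith
qed

lemma norm_add_scale_sq:
  fixes d D :: "'a::real_inner"
  shows "(norm (d + a *\<^sub>R D))^2 = (norm d)^2 + 2 * a * (d \<bullet> D) + a^2 * (norm D)^2"
  unfolding power2_norm_eq_inner by (simp add: inner_add_left inner_add_right inner_commute power2_eq_square algebra_simps)

lemma prox_min_vi:
  fixes g :: "'a::real_inner \<Rightarrow> ereal"
  assumes pr: "proper_fun g" and cvx: "convex_fun g" and c: "c > 0"
    and mn: "\<forall>v. ereal c * g p + ereal ((norm (p - z))\<^sup>2 / 2) \<le> ereal c * g v + ereal ((norm (v - z))\<^sup>2 / 2)"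
  shows "g p = ereal (real_of_ereal (g p))"
    and "\<And>v V. g v = ereal V \<Longrightarrow> (z - p) \<bullet> (v - p) \<le> c * (V - real_of_ereal (g p))"
proof -
  have pm: "\<forall>x. g x \<noteq> -\<infinity>" using pr by (simp add: proper_fun_def)
  obtain v0 where v0: "g v0 \<noteq> \<infinity>" using pr by (auto simp: proper_fun_def)
  obtain g0 where g0: "g v0 = ereal g0" using v0 pm by (cases "g v0") auto
  have "g p \<noteq> \<infinity>"
  proof
    assume "g p = \<infinity>"
    then have "ereal c * g p = \<infinity>" using c by simp
    then have i: "ereal c * g p + ereal ((norm (p - z))\<^sup>2 / 2) = \<infinity>" by simp
    have "ereal c * g v0 + ereal ((norm (v0 - z))\<^sup>2 / 2) = ereal (c * g0 + (norm (v0 - z))\<^sup>2 / 2)" using g0 by simp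
    moreover have "ereal c * g p + ereal ((norm (p - z))\<^sup>2 / 2) \<le> ereal c * g v0 + ereal ((norm (v0 - z))\<^sup>2 / 2)"
      using mn by blast
    ultimately have "\<infinity> \<le> ereal (c * g0 + (norm (v0 - z))\<^sup>2 / 2)" unfolding i by simp
    then show False by simp
  qed
  then obtain P where P: "g p = ereal P" using pm by (cases "g p") auto
  then show "g p = ereal (real_of_ereal (g p))" by simp
  fix v V assume V: "g v = ereal V"
  have key: "(z - p) \<bullet> (v - p) \<le> c * (V - P) + a * ((norm (v - p))^2 / 2)" if a: "0 < a" "a \<le> 1" for a
  proof -
    define w where "w = (1 - a) *\<^sub>R p + a *\<^sub>R v"
    have "g w \<le> ereal (1 - a) * g p + ereal a * g v" using cvx a unfolding convex_fun_def w_def by auto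
    then have gw: "g w \<le> ereal ((1 - a) * P + a * V)" using P V by simp
    then have "g w \<noteq> \<infinity>" by auto
    then obtain W where W: "g w = ereal W" using pm by (cases "g w") auto
    have WW: "W \<le> (1 - a) * P + a * V" using gw W by simp
    have "ereal c * g p + ereal ((norm (p - z))\<^sup>2 / 2) \<le> ereal c * g w + ereal ((norm (w - z))\<^sup>2 / 2)"
      using mn by blast
    then have m1: "c * P + (norm (p - z))\<^sup>2 / 2 \<le> c * W + (norm (w - z))\<^sup>2 / 2" using P W by simp
    have wz: "w - z = (p - z) + a *\<^sub>R (v - p)" by (simp add: w_def algebra_simps)
    have nw: "(norm (w - z))^2 = (norm (p - z))^2 + 2 * a * ((p - z) \<bullet> (v - p)) + a^2 * (norm (v - p))^2"
      unfolding wz by (rule norm_add_scale_sq)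
    have "c * W \<le> c * ((1 - a) * P + a * V)" using WW c by (intro mult_left_mono) auto
    with m1 nw have "0 \<le> a * (c * (V - P) + (p - z) \<bullet> (v - p) + a * ((norm (v - p))^2 / 2))"
      by (simp add: algebra_simps power2_eq_square)
    then have "0 \<le> c * (V - P) + (p - z) \<bullet> (v - p) + a * ((norm (v - p))^2 / 2)"
      using a by (simp add: zero_le_mult_iff)
    moreover have "(z - p) \<bullet> (v - p) = - ((p - z) \<bullet> (v - p))" by (simp add: inner_diff_left)
    ultimately show ?thesis by linarith
  qed
  have "(z - p) \<bullet> (v - p) \<le> c * (V - P)" by (rule small_param[OF _ key]) auto
  then show "(z - p) \<bullet> (v - p) \<le> c * (V - real_of_ereal (g p))" using P by simp
qed


lemma prox_is_min:
  fixes g :: "'a::euclidean_space \<Rightarrow> ereal"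
  assumes l: "lsc_fun g" and pr: "proper_fun g" and cvx: "convex_fun g" and c: "c > 0"
  shows "\<forall>v. ereal c * g (prox (\<lambda>v. ereal c * g v) z) + ereal ((norm (prox (\<lambda>v. ereal c * g v) z - z))\<^sup>2 / 2)
            \<le> ereal c * g v + ereal ((norm (v - z))\<^sup>2 / 2)"
proof -
  let ?M = "\<lambda>p. \<forall>v. ereal c * g p + ereal ((norm (p - z))\<^sup>2 / 2) \<le> ereal c * g v + ereal ((norm (v - z))\<^sup>2 / 2)"
  obtain p0 where p0: "?M p0" using prox_min_exists[OF l pr cvx c] by blast
  have uniq: "q = p0" if q: "?M q" for q
  proof -
    have a: "(z - q) \<bullet> (p0 - q) \<le> c * (real_of_ereal (g p0) - real_of_ereal (g q))"
      using prox_min_vi[OF pr cvx c q] prox_min_vi(1)[OF pr cvx c p0] by metis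
    have b: "(z - p0) \<bullet> (q - p0) \<le> c * (real_of_ereal (g q) - real_of_ereal (g p0))"
      using prox_min_vi[OF pr cvx c p0] prox_min_vi(1)[OF pr cvx c q] by metis
    have "(z - q) \<bullet> (p0 - q) + (z - p0) \<bullet> (q - p0) = (q - p0) \<bullet> (q - p0)"
      by (simp add: inner_diff_left inner_diff_right inner_commute algebra_simps)
    with a b have "(q - p0) \<bullet> (q - p0) \<le> 0" by (simp add: algebra_simps)
    then have "q - p0 = 0" using inner_gt_zero_iff[of "q - p0"] by linarith
    then show ?thesis by simp
  qed
  have "prox (\<lambda>v. ereal c * g v) z = p0"
    unfolding prox_def
  proof (rule the_equality)
    show "?M p0" by (rule p0)
    fix q assume "?M q" then show "q = p0" by (rule uniq)
  qed
  then show ?thesis using p0 by simp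
qed

lemma prox_nonexp:
  fixes g :: "'a::euclidean_space \<Rightarrow> ereal"
  assumes l: "lsc_fun g" and pr: "proper_fun g" and cvx: "convex_fun g" and c: "c > 0"
  shows "norm (prox (\<lambda>v. ereal c * g v) z1 - prox (\<lambda>v. ereal c * g v) z2) \<le> norm (z1 - z2)"
proof -
  define p1 where "p1 = prox (\<lambda>v. ereal c * g v) z1"
  define p2 where "p2 = prox (\<lambda>v. ereal c * g v) z2"
  have m1: "\<forall>v. ereal c * g p1 + ereal ((norm (p1 - z1))\<^sup>2 / 2) \<le> ereal c * g v + ereal ((norm (v - z1))\<^sup>2 / 2)"
    unfolding p1_def by (rule prox_is_min[OF l pr cvx c])
  have m2: "\<forall>v. ereal c * g p2 + ereal ((norm (p2 - z2))\<^sup>2 / 2) \<le> ereal c * g v + ereal ((norm (v - z2))\<^sup>2 / 2)"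
    unfolding p2_def by (rule prox_is_min[OF l pr cvx c])
  have a: "(z1 - p1) \<bullet> (p2 - p1) \<le> c * (real_of_ereal (g p2) - real_of_ereal (g p1))"
    using prox_min_vi[OF pr cvx c m1] prox_min_vi(1)[OF pr cvx c m2] by metis
  have b: "(z2 - p2) \<bullet> (p1 - p2) \<le> c * (real_of_ereal (g p1) - real_of_ereal (g p2))"
    using prox_min_vi[OF pr cvx c m2] prox_min_vi(1)[OF pr cvx c m1] by metis
  have "(z1 - p1) \<bullet> (p2 - p1) + (z2 - p2) \<bullet> (p1 - p2) = (p1 - p2) \<bullet> (p1 - p2) - (z1 - z2) \<bullet> (p1 - p2)"
    by (simp add: inner_diff_left inner_diff_right inner_commute algebra_simps)
  with a b have "(p1 - p2) \<bullet> (p1 - p2) \<le> (z1 - z2) \<bullet> (p1 - p2)" by (simp add: algebra_simps)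
  also have "\<dots> \<le> norm (z1 - z2) * norm (p1 - p2)" by (rule norm_cauchy_schwarz)
  finally have "norm (p1 - p2) * norm (p1 - p2) \<le> norm (z1 - z2) * norm (p1 - p2)"
    by (simp add: dot_square_norm power2_eq_square)
  then have "norm (p1 - p2) \<le> norm (z1 - z2)"
  proof (cases "norm (p1 - p2) = 0")
    case True then show ?thesis by simp
  next
    case False
    then have "norm (p1 - p2) > 0" by simp
    with \<open>norm (p1 - p2) * norm (p1 - p2) \<le> norm (z1 - z2) * norm (p1 - p2)\<close>
    show ?thesis by (simp add: mult_le_cancel_right)
  qed
  then show ?thesis by (simp add: p1_def p2_def)
qed


theorem mainTheorem9:
  fixes f1 f2 \<omega> :: "'a::euclidean_space \<Rightarrow> real"
    and gf1 gf2 g\<omega> :: "'a \<Rightarrow> 'a"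
    and g1 g2 :: "'a \<Rightarrow> ereal"
    and Lf1 Lf2 L\<omega> \<mu> u t s :: real
    and \<alpha> \<beta> :: "nat \<Rightarrow> real"
    and x :: "nat \<Rightarrow> 'a"
  assumes f1_convex: "convex_on UNIV f1" and f2_convex: "convex_on UNIV f2"
    and grad_f1: "is_gradient f1 gf1" and grad_f2: "is_gradient f2 gf2"
    and Lf1_pos: "Lf1 > 0" and Lf2_pos: "Lf2 > 0"
    and lip_f1: "Lf1-lipschitz_on UNIV gf1" and lip_f2: "Lf2-lipschitz_on UNIV gf2"
    and g1_proper: "proper_fun g1" and g1_lsc: "lsc_fun g1" and g1_convex: "convex_fun g1"
    and g2_proper: "proper_fun g2" and g2_lsc: "lsc_fun g2" and g2_convex: "convex_fun g2"
    and \<mu>_pos: "\<mu> > 0" and \<omega>_sc: "strongly_convex \<mu> \<omega>"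
    and grad_\<omega>: "is_gradient \<omega> g\<omega>" and L\<omega>_pos: "L\<omega> > 0"
    and lip_\<omega>: "L\<omega>-lipschitz_on UNIV g\<omega>"
    and Ystar_ne: "{y. \<forall>z. ereal (f2 y) + g2 y \<le> ereal (f2 z) + g2 z} \<noteq> {}"
    and Xstar_ne: "{y \<in> {y. \<forall>z. ereal (f2 y) + g2 y \<le> ereal (f2 z) + g2 z}.
                     \<forall>z \<in> {y. \<forall>z. ereal (f2 y) + g2 y \<le> ereal (f2 z) + g2 z}.
                       ereal (f1 y) + g1 y \<le> ereal (f1 z) + g1 z} \<noteq> {}"
    and u_range: "0 < u" "u \<le> 2 / (L\<omega> + \<mu>)"
    and t_range: "0 < t" "t \<le> 1 / Lf1"
    and s_range: "0 < s" "s \<le> 1 / Lf2"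
    and \<alpha>_range: "\<And>k. 0 < \<alpha> k \<and> \<alpha> k < 1"
    and \<beta>_range: "\<And>k. 0 < \<beta> k \<and> \<beta> k < 1"
    and iter: "\<And>k. x (Suc k) =
        \<alpha> k *\<^sub>R (x k - u *\<^sub>R g\<omega> (x k))
      + ((1 - \<alpha> k) * \<beta> k) *\<^sub>R fb_step t g1 gf1 (x k)
      + ((1 - \<alpha> k) * (1 - \<beta> k)) *\<^sub>R fb_step s g2 gf2 (x k)"
    and Omega_ne: "{z \<in> Fix (fb_step s g2 gf2). \<forall>y \<in> Fix (fb_step s g2 gf2).
                     (z - fb_step t g1 gf1 z) \<bullet> (y - z) \<ge> 0} \<noteq> {}"
    and ratio_lim: "filterlim (\<lambda>k. \<beta> k / \<alpha> k) at_top sequentially"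
    and \<beta>_lim: "\<beta> \<longlonglongrightarrow> 0" and \<alpha>_lim: "\<alpha> \<longlonglongrightarrow> 0"
    and \<alpha>_not_summable: "\<not> summable \<alpha>"
    and K_bound: "\<exists>K>0. limsup (\<lambda>k. ereal (1 / \<alpha> (Suc k) * \<bar>1 / \<beta> (Suc k) - 1 / \<beta> k\<bar>)) \<le> ereal K"
    and diff_cond: "limsup (\<lambda>k. ereal ((\<bar>\<beta> (Suc k) - \<beta> k\<bar> + \<bar>\<alpha> (Suc k) - \<alpha> k\<bar>)
                        / (\<alpha> (Suc k) * \<beta> (Suc k)))) = 0"
    and x_bounded: "bounded (range x)"
    and A1: "limsup (\<lambda>k. ereal (infdist (x (Suc k)) (Fix (fb_step s g2 gf2)) / \<alpha> k)) < \<infinity>"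
  shows "\<exists>xs. xs \<in> {z \<in> Fix (fb_step s g2 gf2). \<forall>y \<in> Fix (fb_step s g2 gf2).
                     (z - fb_step t g1 gf1 z) \<bullet> (y - z) \<ge> 0}
           \<and> (\<forall>z \<in> {z \<in> Fix (fb_step s g2 gf2). \<forall>y \<in> Fix (fb_step s g2 gf2).
                     (z - fb_step t g1 gf1 z) \<bullet> (y - z) \<ge> 0}.
                 (xs - (xs - u *\<^sub>R g\<omega> xs)) \<bullet> (z - xs) \<ge> 0)
           \<and> (\<forall>w. w \<in> {z \<in> Fix (fb_step s g2 gf2). \<forall>y \<in> Fix (fb_step s g2 gf2).
                     (z - fb_step t g1 gf1 z) \<bullet> (y - z) \<ge> 0}
                 \<and> (\<forall>z \<in> {z \<in> Fix (fb_step s g2 gf2). \<forall>y \<in> Fix (fb_step s g2 gf2).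
                     (z - fb_step t g1 gf1 z) \<bullet> (y - z) \<ge> 0}.
                       (w - (w - u *\<^sub>R g\<omega> w)) \<bullet> (z - w) \<ge> 0) \<longrightarrow> w = xs)
           \<and> x \<longlonglongrightarrow> xs"
proof -
  define S where "S = (\<lambda>x. x - u *\<^sub>R g\<omega> x)"
  define T where "T = fb_step t g1 gf1"
  define W where "W = fb_step s g2 gf2"
  obtain r where r: "0 \<le> r" "r < 1" and Sc0: "\<forall>a b. norm ((a - u *\<^sub>R g\<omega> a) - (b - u *\<^sub>R g\<omega> b)) \<le> r * norm (a - b)"
    using S_contraction[OF \<omega>_sc grad_\<omega> \<mu>_pos lip_\<omega> L\<omega>_pos u_range] by blast
  have Sc: "\<And>a b. norm (S a - S b) \<le> r * norm (a - b)" using Sc0 by (simp add: S_def)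
  have Tn: "\<And>a b. norm (T a - T b) \<le> norm (a - b)"
  proof -
    fix a b
    have "norm (T a - T b) \<le> norm ((a - t *\<^sub>R gf1 a) - (b - t *\<^sub>R gf1 b))"
      unfolding T_def fb_step_def by (rule prox_nonexp[OF g1_lsc g1_proper g1_convex t_range(1)])
    also have "\<dots> \<le> norm (a - b)"
    proof (rule grad_step_nonexp[OF f1_convex grad_f1 lip_f1 Lf1_pos])
      show "0 \<le> t" using t_range by simp
      have "1 / Lf1 \<le> 2 / Lf1" using Lf1_pos by (simp add: divide_right_mono)
      then show "t \<le> 2 / Lf1" using t_range by linarith
    qed
    finally show "norm (T a - T b) \<le> norm (a - b)" .
  qed
  have Wn: "\<And>a b. norm (W a - W b) \<le> norm (a - b)"
  proof -
    fix a b
    have "norm (W a - W b) \<le> norm ((a - s *\<^sub>R gf2 a) - (b - s *\<^sub>R gf2 b))"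
      unfolding W_def fb_step_def by (rule prox_nonexp[OF g2_lsc g2_proper g2_convex s_range(1)])
    also have "\<dots> \<le> norm (a - b)"
    proof (rule grad_step_nonexp[OF f2_convex grad_f2 lip_f2 Lf2_pos])
      show "0 \<le> s" using s_range by simp
      have "1 / Lf2 \<le> 2 / Lf2" using Lf2_pos by (simp add: divide_right_mono)
      then show "s \<le> 2 / Lf2" using s_range by linarith
    qed
    finally show "norm (W a - W b) \<le> norm (a - b)" .
  qed
  have iter': "\<And>k. x (Suc k) = \<alpha> k *\<^sub>R S (x k) + ((1 - \<alpha> k) * \<beta> k) *\<^sub>R T (x k)
                           + ((1 - \<alpha> k) * (1 - \<beta> k)) *\<^sub>R W (x k)"
    using iter by (simp add: S_def T_def W_def)
  define Om where "Om = {z \<in> Fix W. \<forall>y \<in> Fix W. (z - T z) \<bullet> (y - z) \<ge> 0}"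
  have Omne: "Om \<noteq> {}" using Omega_ne by (simp add: Om_def T_def W_def)
  obtain K where K: "K > 0" "limsup (\<lambda>k. ereal (1 / \<alpha> (Suc k) * \<bar>1 / \<beta> (Suc k) - 1 / \<beta> k\<bar>)) \<le> ereal K"
    using K_bound by blast
  have "limsup (\<lambda>k. ereal (1 / \<alpha> (Suc k) * \<bar>1 / \<beta> (Suc k) - 1 / \<beta> k\<bar>)) < ereal (K + 1)"
    using K(2) by (rule le_less_trans) simp
  from Limsup_lessD[OF this]
  have Kb: "eventually (\<lambda>k. 1 / \<alpha> (Suc k) * \<bar>1 / \<beta> (Suc k) - 1 / \<beta> k\<bar> \<le> K + 1) sequentially"
    by (auto elim: eventually_mono)
  define \<rho> where "\<rho> k = (\<bar>\<beta> (Suc k) - \<beta> k\<bar> + \<bar>\<alpha> (Suc k) - \<alpha> k\<bar>) / (\<alpha> (Suc k) * \<beta> (Suc k))" for k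
  have \<rho>0: "\<rho> k \<ge> 0" for k using \<alpha>_range[of "Suc k"] \<beta>_range[of "Suc k"] by (simp add: \<rho>_def)
  have dc: "\<rho> \<longlonglongrightarrow> 0"
  proof (rule order_tendstoI)
    fix a :: real assume "a < 0"
    then have "\<forall>k. a < \<rho> k" using \<rho>0 by (auto intro: less_le_trans)
    then show "eventually (\<lambda>k. a < \<rho> k) sequentially" by (simp add: always_eventually)
  next
    fix a :: real assume a: "0 < a"
    have "limsup (\<lambda>k. ereal (\<rho> k)) < ereal a" using diff_cond a by (simp add: \<rho>_def)
    from Limsup_lessD[OF this] show "eventually (\<lambda>k. \<rho> k < a) sequentially" by simp
  qed
  have dc': "(\<lambda>k. (\<bar>\<beta> (Suc k) - \<beta> k\<bar> + \<bar>\<alpha> (Suc k) - \<alpha> k\<bar>) / (\<alpha> (Suc k) * \<beta> (Suc k))) \<longlonglongrightarrow> 0"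
    using dc by (simp add: \<rho>_def[abs_def])
  obtain C where C: "limsup (\<lambda>k. ereal (infdist (x (Suc k)) (Fix (fb_step s g2 gf2)) / \<alpha> k)) < ereal C"
  proof (cases "limsup (\<lambda>k. ereal (infdist (x (Suc k)) (Fix (fb_step s g2 gf2)) / \<alpha> k))")
    case (real c) then show ?thesis using that[of "c + 1"] by simp
  next
    case PInf then show ?thesis using A1 by simp
  next
    case MInf then show ?thesis using that[of 0] by simp
  qed
  from Limsup_lessD[OF C]
  have A1': "eventually (\<lambda>k. infdist (x (Suc k)) (Fix W) \<le> C * \<alpha> k) sequentially"
  proof (rule eventually_mono)
    fix k assume "ereal (infdist (x (Suc k)) (Fix (fb_step s g2 gf2)) / \<alpha> k) < ereal C"
    then have "infdist (x (Suc k)) (Fix W) / \<alpha> k < C" by (simp add: W_def)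
    then show "infdist (x (Suc k)) (Fix W) \<le> C * \<alpha> k"
      using \<alpha>_range[of k] by (simp add: divide_less_eq less_imp_le)
  qed
  have main: "\<exists>xs. xs \<in> Om \<and> (\<forall>z\<in>Om. (xs - S xs) \<bullet> (z - xs) \<ge> 0)
     \<and> (\<forall>w. w \<in> Om \<and> (\<forall>z\<in>Om. (w - S w) \<bullet> (z - w) \<ge> 0) \<longrightarrow> w = xs) \<and> x \<longlonglongrightarrow> xs"
    by (rule abstract_main[OF r Sc Tn Wn \<alpha>_range \<beta>_range iter' Om_def Omne ratio_lim \<beta>_lim \<alpha>_lim
          \<alpha>_not_summable Kb dc' x_bounded A1'])
  then show ?thesis by (simp add: Om_def S_def T_def W_def)
qed


end
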